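(* Let $S$ and $T$ be totally ordered sets, $x\in S$, $y\in T$, and let $Q$ be one of the subposets of $S\times T$ (product order) $$(x,y)^{\rightleftarrows}=\big(\{x\}\times\{t\in T:t\le y\}\big)\cup\big(\{s\in S:s\le x\}\times\{y\}\big),\qquad (x,y)^{\leftrightarrows}=\big(\{x\}\times\{t\in T:t\ge y\}\big)\cup\big(\{s\in S:s\ge x\}\times\{y\}\big).$$ If $M\colon Q\to\mathbf{Vec}$ is pointwise finite-dimensional and indecomposable, then $M\cong k_I$ for some interval $I\subseteq Q$.
   Context: Persistence modules over a poset are functors to $k$-vector spaces. An interval in $Q$ is a non-empty subset that is convex ($p\le q\le r$ with $p,r$ in it implies $q$ in it) and connected (any two elements are joined by a finite sequence of elements of the subset with consecutive elements comparable). $k_I$ is $k$ at points of $I$, $0$ elsewhere, with identity maps between points of $I$ and zero maps otherwise. *)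

theory Defs
  imports Main HOL.Vector_Spaces "HOL-Library.Product_Order"
begin

text \<open>All vector spaces of a module are realised as
subspaces of one ambient k-vector space 'v (with scalar multiplication sc);
the structure maps are f q r : V q -> V r for q <= r.\<close>

definition pmod ::
  "('k::field \<Rightarrow> 'v::ab_group_add \<Rightarrow> 'v) \<Rightarrow> 'q::order set \<Rightarrow> ('q \<Rightarrow> 'v set)
   \<Rightarrow> ('q \<Rightarrow> 'q \<Rightarrow> 'v \<Rightarrow> 'v) \<Rightarrow> bool" where
  "pmod sc Q V f \<longleftrightarrow>
     (\<forall>q\<in>Q. module.subspace sc (V q)) \<and>
     (\<forall>q\<in>Q. \<forall>r\<in>Q. q \<le> r \<longrightarrow>
        (\<forall>v\<in>V q. f q r v \<in> V r) \<and>
        (\<forall>u\<in>V q. \<forall>v\<in>V q. f q r (u + v) = f q r u + f q r v) \<and>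
        (\<forall>c. \<forall>v\<in>V q. f q r (sc c v) = sc c (f q r v))) \<and>
     (\<forall>q\<in>Q. \<forall>v\<in>V q. f q q v = v) \<and>
     (\<forall>q\<in>Q. \<forall>r\<in>Q. \<forall>s\<in>Q. q \<le> r \<longrightarrow> r \<le> s \<longrightarrow>
        (\<forall>v\<in>V q. f r s (f q r v) = f q s v))"

definition pfd ::
  "('k::field \<Rightarrow> 'v::ab_group_add \<Rightarrow> 'v) \<Rightarrow> 'q set \<Rightarrow> ('q \<Rightarrow> 'v set) \<Rightarrow> bool" where
  "pfd sc Q V \<longleftrightarrow> (\<forall>q\<in>Q. \<exists>B. finite B \<and> B \<subseteq> V q \<and> module.span sc B = V q)"

definition submod ::
  "('k::field \<Rightarrow> 'v::ab_group_add \<Rightarrow> 'v) \<Rightarrow> 'q::order set \<Rightarrow> ('q \<Rightarrow> 'v set)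
   \<Rightarrow> ('q \<Rightarrow> 'q \<Rightarrow> 'v \<Rightarrow> 'v) \<Rightarrow> ('q \<Rightarrow> 'v set) \<Rightarrow> bool" where
  "submod sc Q V f A \<longleftrightarrow>
     (\<forall>q\<in>Q. module.subspace sc (A q) \<and> A q \<subseteq> V q) \<and>
     (\<forall>q\<in>Q. \<forall>r\<in>Q. q \<le> r \<longrightarrow> (\<forall>v\<in>A q. f q r v \<in> A r))"

definition indecomposable ::
  "('k::field \<Rightarrow> 'v::ab_group_add \<Rightarrow> 'v) \<Rightarrow> 'q::order set \<Rightarrow> ('q \<Rightarrow> 'v set)
   \<Rightarrow> ('q \<Rightarrow> 'q \<Rightarrow> 'v \<Rightarrow> 'v) \<Rightarrow> bool" where
  "indecomposable sc Q V f \<longleftrightarrow>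
     pmod sc Q V f \<and> (\<exists>q\<in>Q. V q \<noteq> {0}) \<and>
     (\<forall>A B. submod sc Q V f A \<and> submod sc Q V f B \<and>
        (\<forall>q\<in>Q. \<forall>v\<in>V q. \<exists>a\<in>A q. \<exists>b\<in>B q. v = a + b) \<and>
        (\<forall>q\<in>Q. A q \<inter> B q = {0})
        \<longrightarrow> (\<forall>q\<in>Q. A q = {0}) \<or> (\<forall>q\<in>Q. B q = {0}))"

definition pmod_iso ::
  "('k::field \<Rightarrow> 'v::ab_group_add \<Rightarrow> 'v) \<Rightarrow> 'q::order set \<Rightarrow> ('q \<Rightarrow> 'v set)
   \<Rightarrow> ('q \<Rightarrow> 'q \<Rightarrow> 'v \<Rightarrow> 'v)
   \<Rightarrow> ('k \<Rightarrow> 'w::ab_group_add \<Rightarrow> 'w) \<Rightarrow> ('q \<Rightarrow> 'w set) \<Rightarrow> ('q \<Rightarrow> 'q \<Rightarrow> 'w \<Rightarrow> 'w) \<Rightarrow> bool" where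
  "pmod_iso sc Q V f sc' W g \<longleftrightarrow>
     (\<exists>\<phi>. (\<forall>q\<in>Q. bij_betw (\<phi> q) (V q) (W q) \<and>
              (\<forall>u\<in>V q. \<forall>v\<in>V q. \<phi> q (u + v) = \<phi> q u + \<phi> q v) \<and>
              (\<forall>c. \<forall>v\<in>V q. \<phi> q (sc c v) = sc' c (\<phi> q v))) \<and>
          (\<forall>q\<in>Q. \<forall>r\<in>Q. q \<le> r \<longrightarrow> (\<forall>v\<in>V q. \<phi> r (f q r v) = g q r (\<phi> q v))))"

definition is_interval :: "'q::order set \<Rightarrow> 'q set \<Rightarrow> bool" where
  "is_interval Q I \<longleftrightarrow> I \<subseteq> Q \<and> I \<noteq> {} \<and>
     (\<forall>p\<in>I. \<forall>q\<in>Q. \<forall>r\<in>I. p \<le> q \<and> q \<le> r \<longrightarrow> q \<in> I) \<and>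
     (\<forall>p\<in>I. \<forall>q\<in>I. (\<lambda>a b. a \<in> I \<and> b \<in> I \<and> (a \<le> b \<or> b \<le> a))\<^sup>*\<^sup>* p q)"

definition kI_space :: "'q set \<Rightarrow> 'q \<Rightarrow> 'k::field set" where
  "kI_space I q = (if q \<in> I then UNIV else {0})"

definition kI_map :: "'q set \<Rightarrow> 'q \<Rightarrow> 'q \<Rightarrow> 'k::field \<Rightarrow> 'k" where
  "kI_map I q r c = (if q \<in> I \<and> r \<in> I then c else 0)"

definition cross_down :: "'s::linorder \<Rightarrow> 't::linorder \<Rightarrow> ('s \<times> 't) set" where
  "cross_down x y = ({x} \<times> {t. t \<le> y}) \<union> ({s. s \<le> x} \<times> {y})"

definition cross_up :: "'s::linorder \<Rightarrow> 't::linorder \<Rightarrow> ('s \<times> 't) set" where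
  "cross_up x y = ({x} \<times> {t. t \<ge> y}) \<union> ({s. s \<ge> x} \<times> {y})"

end

theory Submission
  imports Defs
begin

context vector_space
begin

lemma indep_card_le_dim:
  assumes "independent A" "A \<subseteq> T" "T \<subseteq> span B0" "finite B0"
  shows "finite A \<and> card A \<le> dim T"
proof -
  obtain B where B: "A \<subseteq> B" "B \<subseteq> T" "independent B" "T \<subseteq> span B"
    using maximal_independent_subset_extend[OF assms(2,1)] by blast
  have fB: "finite B" using independent_span_bound[OF assms(4) B(3)] B(2) assms(3) by blast
  have "card B = dim T" using basis_card_eq_dim B by blast
  then show ?thesis using B(1) fB card_mono finite_subset by metis
qed

lemma subspace_eq_dim:
  assumes "subspace S" "S \<subseteq> T" "T \<subseteq> span B0" "finite B0" "dim T \<le> dim S"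
  shows "S = T"
proof (rule ccontr)
  assume "S \<noteq> T"
  then obtain t where t: "t \<in> T" "t \<notin> S" using assms(2) by blast
  obtain A where A: "A \<subseteq> S" "independent A" "S \<subseteq> span A" "card A = dim S"
    using basis_exists by blast
  have spA: "span A = S" using span_subspace A assms(1) by blast
  have tA: "t \<notin> span A" using spA t by simp
  have ind: "independent (insert t A)" using independent_insertI[OF tA A(2)] .
  have sub: "insert t A \<subseteq> T" using A(1) assms(2) t(1) by blast
  have fc: "finite (insert t A) \<and> card (insert t A) \<le> dim T"
    using indep_card_le_dim[OF ind sub assms(3,4)] .
  have "t \<notin> A" using tA span_base by blast
  then have "card (insert t A) = card A + 1" using fc by simp
  then show False using fc A(4) assms(5) by simp
qed

lemma chain_subspace_min:
  assumes "finite B0" "\<SS> \<noteq> {}" "\<And>S. S \<in> \<SS> \<Longrightarrow> subspace S \<and> S \<subseteq> span B0"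
    "\<And>S T. S \<in> \<SS> \<Longrightarrow> T \<in> \<SS> \<Longrightarrow> S \<subseteq> T \<or> T \<subseteq> S"
  shows "\<exists>S\<in>\<SS>. \<forall>T\<in>\<SS>. S \<subseteq> T"
proof -
  obtain S0 where "S0 \<in> \<SS>" using assms(2) by blast
  then obtain S where S: "S \<in> \<SS>" "\<forall>T. T \<in> \<SS> \<longrightarrow> dim S \<le> dim T"
    using ex_has_least_nat[of "\<lambda>S. S \<in> \<SS>" S0 dim] by blast
  have "\<forall>T\<in>\<SS>. S \<subseteq> T"
  proof
    fix T assume T: "T \<in> \<SS>"
    show "S \<subseteq> T"
    proof (cases "S \<subseteq> T")
      case False
      then have "T \<subseteq> S" using assms(4)[OF S(1) T] by blast
      then have "T = S" using subspace_eq_dim[of T S B0] assms(1,3) S T by blast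
      then show ?thesis by simp
    qed simp
  qed
  then show ?thesis using S(1) by blast
qed

lemma chain_subspace_max:
  assumes "finite B0" "\<SS> \<noteq> {}" "\<And>S. S \<in> \<SS> \<Longrightarrow> subspace S \<and> S \<subseteq> span B0"
    "\<And>S T. S \<in> \<SS> \<Longrightarrow> T \<in> \<SS> \<Longrightarrow> S \<subseteq> T \<or> T \<subseteq> S"
  shows "\<exists>S\<in>\<SS>. \<forall>T\<in>\<SS>. T \<subseteq> S"
proof -
  obtain S0 where "S0 \<in> \<SS>" using assms(2) by blast
  have bd: "\<forall>T. T \<in> \<SS> \<longrightarrow> dim T < card B0 + 1"
  proof (intro allI impI)
    fix T assume "T \<in> \<SS>"
    then have "dim T \<le> card B0" using dim_le_card[of T B0] assms(1,3) by blast
    then show "dim T < card B0 + 1" by simp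
  qed
  obtain S where S: "S \<in> \<SS>" "\<forall>T. T \<in> \<SS> \<longrightarrow> dim T \<le> dim S"
    using Lattices_Big.ex_has_greatest_nat[of "\<lambda>S. S \<in> \<SS>" S0 dim, OF \<open>S0 \<in> \<SS>\<close> bd] by blast
  have "\<forall>T\<in>\<SS>. T \<subseteq> S"
  proof
    fix T assume T: "T \<in> \<SS>"
    show "T \<subseteq> S"
    proof (cases "T \<subseteq> S")
      case False
      then have "S \<subseteq> T" using assms(4)[OF S(1) T] by blast
      then have "S = T" using subspace_eq_dim[of S T B0] assms(1,3) S T by blast
      then show ?thesis by simp
    qed simp
  qed
  then show ?thesis using S(1) by blast
qed

lemma hyperplane_exists:
  assumes "subspace G" "G \<subseteq> W" "subspace W" "w \<in> W" "w \<notin> G"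
  shows "\<exists>H. subspace H \<and> G \<subseteq> H \<and> H \<subseteq> W \<and> w \<notin> H \<and> (\<forall>z\<in>W. \<exists>h\<in>H. \<exists>c. z = h + c *s w)"
proof -
  obtain A where A: "A \<subseteq> G" "independent A" "G \<subseteq> span A"
    using maximal_independent_subset by blast
  have spA: "span A = G" using span_subspace A assms(1) by blast
  have wA: "w \<notin> span A" using spA assms(5) by simp
  have ind: "independent (insert w A)" using independent_insertI[OF wA A(2)] .
  have sub: "insert w A \<subseteq> W" using A(1) assms(2,4) by blast
  obtain B where B: "insert w A \<subseteq> B" "B \<subseteq> W" "independent B" "W \<subseteq> span B"
    using maximal_independent_subset_extend[OF sub ind] by blast
  define H where "H = span (B - {w})"
  have "w \<notin> A" using wA span_base by blast
  then have "A \<subseteq> B - {w}" using B(1) by blast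
  then have GH: "G \<subseteq> H" unfolding H_def using spA span_mono by blast
  have HW: "H \<subseteq> W" unfolding H_def using span_minimal[of "B - {w}" W] B(2) assms(3) by blast
  have wH: "w \<notin> H" unfolding H_def using B(1,3) dependent_def by blast
  have sp: "\<forall>z\<in>W. \<exists>h\<in>H. \<exists>c. z = h + c *s w"
  proof
    fix z assume "z \<in> W"
    have "insert w (B - {w}) = B" using B(1) by blast
    then have "z \<in> span (insert w (B - {w}))" using B(4) \<open>z \<in> W\<close> by auto
    then obtain k where "z - k *s w \<in> H" unfolding H_def span_insert by blast
    then show "\<exists>h\<in>H. \<exists>c. z = h + c *s w" by (intro bexI[of _ "z - k *s w"] exI[of _ k]) auto
  qed
  show ?thesis using GH HW wH sp subspace_span H_def by blast
qed

lemma union_chain_subspace: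
  assumes "\<SS> \<noteq> {}" "\<And>S. S \<in> \<SS> \<Longrightarrow> subspace S"
    "\<And>S T. S \<in> \<SS> \<Longrightarrow> T \<in> \<SS> \<Longrightarrow> S \<subseteq> T \<or> T \<subseteq> S"
  shows "subspace (\<Union>\<SS>)"
proof (rule subspaceI)
  show "0 \<in> \<Union>\<SS>" using assms(1,2) subspace_0 by blast
next
  fix a b assume "a \<in> \<Union>\<SS>" "b \<in> \<Union>\<SS>"
  then obtain S T where "S \<in> \<SS>" "T \<in> \<SS>" "a \<in> S" "b \<in> T" by blast
  then show "a + b \<in> \<Union>\<SS>" using assms(2,3) subspace_add by (metis UnionI subsetD)
next
  fix c a assume "a \<in> \<Union>\<SS>"
  then show "c *s a \<in> \<Union>\<SS>" using assms(2) subspace_scale by blast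
qed

end


locale pm = vector_space sc for sc :: "'k::field \<Rightarrow> 'v::ab_group_add \<Rightarrow> 'v" +
  fixes Q :: "'q::order set" and V :: "'q \<Rightarrow> 'v set" and f :: "'q \<Rightarrow> 'q \<Rightarrow> 'v \<Rightarrow> 'v"
  assumes pm: "pmod sc Q V f" and fd: "pfd sc Q V"
begin

lemma pm_all: "(\<forall>q\<in>Q. subspace (V q)) \<and> (\<forall>q\<in>Q. \<forall>r\<in>Q. q \<le> r \<longrightarrow>
        (\<forall>v\<in>V q. f q r v \<in> V r) \<and>
        (\<forall>u\<in>V q. \<forall>v\<in>V q. f q r (u + v) = f q r u + f q r v) \<and>
        (\<forall>c. \<forall>v\<in>V q. f q r (sc c v) = sc c (f q r v))) \<and>
     (\<forall>q\<in>Q. \<forall>v\<in>V q. f q q v = v) \<and>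
     (\<forall>q\<in>Q. \<forall>r\<in>Q. \<forall>s\<in>Q. q \<le> r \<longrightarrow> r \<le> s \<longrightarrow>
        (\<forall>v\<in>V q. f r s (f q r v) = f q s v))"
  using pm unfolding pmod_def .

lemmas pm_parts = conjunct1[OF pm_all] conjunct1[OF conjunct2[OF pm_all]]
  conjunct1[OF conjunct2[OF conjunct2[OF pm_all]]] conjunct2[OF conjunct2[OF conjunct2[OF pm_all]]]

lemma Vsub: "p \<in> Q \<Longrightarrow> subspace (V p)"
  using pm_parts(1) by blast

lemma V0: "p \<in> Q \<Longrightarrow> 0 \<in> V p"
  using Vsub subspace_0 by blast

lemma fV: "p \<in> Q \<Longrightarrow> r \<in> Q \<Longrightarrow> p \<le> r \<Longrightarrow> z \<in> V p \<Longrightarrow> f p r z \<in> V r"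
  using pm_parts(2) by blast

lemma fadd: "p \<in> Q \<Longrightarrow> r \<in> Q \<Longrightarrow> p \<le> r \<Longrightarrow> a \<in> V p \<Longrightarrow> b \<in> V p \<Longrightarrow> f p r (a + b) = f p r a + f p r b"
  using pm_parts(2) by blast

lemma fsc: "p \<in> Q \<Longrightarrow> r \<in> Q \<Longrightarrow> p \<le> r \<Longrightarrow> a \<in> V p \<Longrightarrow> f p r (sc c a) = sc c (f p r a)"
  using pm_parts(2) by blast

lemma fid: "p \<in> Q \<Longrightarrow> a \<in> V p \<Longrightarrow> f p p a = a"
  using pm_parts(3) by blast

lemma fcomp: "p \<in> Q \<Longrightarrow> r \<in> Q \<Longrightarrow> s \<in> Q \<Longrightarrow> p \<le> r \<Longrightarrow> r \<le> s \<Longrightarrow> a \<in> V p \<Longrightarrow> f r s (f p r a) = f p s a"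
  using pm_parts(4) by blast

lemma f0: "p \<in> Q \<Longrightarrow> r \<in> Q \<Longrightarrow> p \<le> r \<Longrightarrow> f p r 0 = 0"
  using fsc[of p r 0 0] V0 by simp

lemma fneg: "p \<in> Q \<Longrightarrow> r \<in> Q \<Longrightarrow> p \<le> r \<Longrightarrow> a \<in> V p \<Longrightarrow> f p r (- a) = - f p r a"
proof -
  assume a: "p \<in> Q" "r \<in> Q" "p \<le> r" "a \<in> V p"
  have "f p r (- a) + f p r a = f p r (- a + a)"
    using fadd[OF a(1-3) _ a(4), of "- a"] subspace_neg[OF Vsub[OF a(1)] a(4)] by simp
  also have "\<dots> = 0" using f0[OF a(1-3)] by simp
  finally have "f p r (- a) + f p r a = 0" .
  then show ?thesis by (simp only: eq_neg_iff_add_eq_0)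
qed

lemma fdiff: "p \<in> Q \<Longrightarrow> r \<in> Q \<Longrightarrow> p \<le> r \<Longrightarrow> a \<in> V p \<Longrightarrow> b \<in> V p \<Longrightarrow> f p r (a - b) = f p r a - f p r b"
proof -
  assume a: "p \<in> Q" "r \<in> Q" "p \<le> r" "a \<in> V p" "b \<in> V p"
  have "- b \<in> V p" using subspace_neg[OF Vsub[OF a(1)] a(5)] .
  then have "f p r (a + - b) = f p r a + f p r (- b)" using fadd[OF a(1-4)] by blast
  then have "f p r (a + - b) = f p r a - f p r b" using fneg[OF a(1-3,5)] by simp
  then show ?thesis by (simp only: diff_conv_add_uminus)
qed

lemma finV: "p \<in> Q \<Longrightarrow> \<exists>B. finite B \<and> V p = span B"
proof -
  assume "p \<in> Q"
  then obtain B where "finite B" "span B = V p" using fd unfolding pfd_def by blast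
  then show ?thesis by blast
qed

lemma scale_eq_self: "sc c a = a \<Longrightarrow> a \<noteq> 0 \<Longrightarrow> c = 1"
proof -
  assume "sc c a = a" "a \<noteq> 0"
  then have "sc c a = sc 1 a" by simp
  then show "c = 1" using scale_cancel_right[of c a 1] \<open>a \<noteq> 0\<close> by simp
qed

lemma scale_mem_imp: "subspace S \<Longrightarrow> sc c a \<in> S \<Longrightarrow> c \<noteq> 0 \<Longrightarrow> a \<in> S"
proof -
  assume "subspace S" "sc c a \<in> S" "c \<noteq> 0"
  then have "sc (inverse c) (sc c a) \<in> S" using subspace_scale by blast
  moreover have "sc (inverse c) (sc c a) = a" using \<open>c \<noteq> 0\<close> by simp
  ultimately show "a \<in> S" by simp
qed

end


context pm
begin

lemma from_family:
  assumes indec: "indecomposable sc Q V f" and q: "q \<in> Q"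
  and nV: "\<forall>p\<in>Q. n p \<in> V p"
  and ncoh: "\<forall>p\<in>Q. \<forall>p'\<in>Q. p \<le> p' \<longrightarrow> n p \<noteq> 0 \<longrightarrow> f p p' (n p) = n p'"
  and nq: "n q \<noteq> 0"
  and ncmp: "\<forall>p\<in>Q. n p \<noteq> 0 \<longrightarrow> p \<le> q \<or> q \<le> p"
  and Csub: "submod sc Q V f C"
  and Cspan: "\<forall>p\<in>Q. \<forall>z\<in>V p. \<exists>c. \<exists>b\<in>C p. z = sc c (n p) + b"
  and Cint: "\<forall>p\<in>Q. \<forall>c. sc c (n p) \<in> C p \<longrightarrow> c = 0 \<or> n p = 0"
  shows "\<exists>I. is_interval Q I \<and> pmod_iso sc Q V f ((*) :: 'k \<Rightarrow> 'k \<Rightarrow> 'k) (kI_space I) (kI_map I)"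
proof -
  define N where "N p = range (\<lambda>c. sc c (n p))" for p
  have Nsub: "submod sc Q V f N"
    unfolding submod_def
  proof (intro conjI ballI impI)
    fix p assume p: "p \<in> Q"
    show "subspace (N p)" unfolding N_def using subspace_span[of "{n p}"] span_singleton by simp
    show "N p \<subseteq> V p" unfolding N_def using subspace_scale[OF Vsub[OF p] nV[rule_format, OF p]] by blast
  next
    fix p r z assume p: "p \<in> Q" "r \<in> Q" "p \<le> r" and "z \<in> N p"
    then obtain c where z: "z = sc c (n p)" unfolding N_def by blast
    show "f p r z \<in> N r"
    proof (cases "n p = 0")
      case True
      then have "f p r z = 0" using z f0 p by simp
      then have "f p r z = sc 0 (n r)" by simp
      then show ?thesis unfolding N_def by blast
    next
      case False
      then have "f p r z = sc c (n r)" using z fsc[OF p(1-3) nV[rule_format, OF p(1)]] ncoh p by simp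
      then show ?thesis unfolding N_def by blast
    qed
  qed
  have C0in: "\<And>p. p \<in> Q \<Longrightarrow> 0 \<in> C p"
    using Csub subspace_0 unfolding submod_def by blast
  have dec: "\<forall>p\<in>Q. \<forall>z\<in>V p. \<exists>a\<in>N p. \<exists>b\<in>C p. z = a + b" using Cspan unfolding N_def by blast
  have int: "\<forall>p\<in>Q. N p \<inter> C p = {0}"
  proof
    fix p assume p: "p \<in> Q"
    have "N p \<inter> C p \<subseteq> {0}"
    proof
      fix z assume "z \<in> N p \<inter> C p"
      then obtain c where "z = sc c (n p)" "sc c (n p) \<in> C p" unfolding N_def by blast
      then show "z \<in> {0}" using Cint p by auto
    qed
    moreover have "0 \<in> N p" unfolding N_def by (metis rangeI scale_zero_left)
    ultimately show "N p \<inter> C p = {0}" using C0in[OF p] by blast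
  qed
  have indclause: "\<forall>A B. submod sc Q V f A \<and> submod sc Q V f B \<and>
        (\<forall>q\<in>Q. \<forall>v\<in>V q. \<exists>a\<in>A q. \<exists>b\<in>B q. v = a + b) \<and>
        (\<forall>q\<in>Q. A q \<inter> B q = {0})
        \<longrightarrow> (\<forall>q\<in>Q. A q = {0}) \<or> (\<forall>q\<in>Q. B q = {0})"
    using indec unfolding indecomposable_def by (elim conjE)
  have "(\<forall>p\<in>Q. N p = {0}) \<or> (\<forall>p\<in>Q. C p = {0})"
    using indclause[rule_format, of N C] Nsub Csub dec int by blast
  moreover have "n q \<in> N q" unfolding N_def by (metis rangeI scale_one)
  ultimately have C0: "\<forall>p\<in>Q. C p = {0}" using nq q by blast
  have VN: "\<And>p. p \<in> Q \<Longrightarrow> V p = N p"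
  proof -
    fix p assume p: "p \<in> Q"
    have "V p \<subseteq> N p"
    proof
      fix z assume "z \<in> V p"
      then obtain c b where "b \<in> C p" "z = sc c (n p) + b" using Cspan p by blast
      then have "z = sc c (n p)" using C0 p by simp
      then show "z \<in> N p" unfolding N_def by blast
    qed
    moreover have "N p \<subseteq> V p" using Nsub p unfolding submod_def by blast
    ultimately show "V p = N p" by blast
  qed
  have Vform: "\<And>p z. p \<in> Q \<Longrightarrow> z \<in> V p \<Longrightarrow> \<exists>c. z = sc c (n p)"
    using VN unfolding N_def by blast
  define I where "I = {p\<in>Q. n p \<noteq> 0}"
  define \<phi> where "\<phi> p z = (if n p = 0 then 0 else (SOME c. z = sc c (n p)))" for p z
  have \<phi>c: "\<And>p c. n p \<noteq> 0 \<Longrightarrow> \<phi> p (sc c (n p)) = c"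
  proof -
    fix p c assume np: "n p \<noteq> 0"
    have "sc c (n p) = sc (SOME c'. sc c (n p) = sc c' (n p)) (n p)"
      by (rule someI[of "\<lambda>c'. sc c (n p) = sc c' (n p)" c]) simp
    then have "c = (SOME c'. sc c (n p) = sc c' (n p))" using np scale_cancel_right by blast
    then show "\<phi> p (sc c (n p)) = c" unfolding \<phi>_def using np by simp
  qed
  have \<phi>0: "\<And>p. \<phi> p 0 = 0"
  proof -
    fix p show "\<phi> p 0 = 0"
    proof (cases "n p = 0")
      case False
      then show ?thesis using \<phi>c[OF False, of 0] by simp
    qed (simp add: \<phi>_def)
  qed
  have kIin: "\<And>p. p \<in> Q \<Longrightarrow> n p \<noteq> 0 \<Longrightarrow> kI_space I p = (UNIV :: 'k set)"
    unfolding kI_space_def I_def by simp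
  have kIout: "\<And>p. n p = 0 \<Longrightarrow> kI_space I p = ({0} :: 'k set)"
    unfolding kI_space_def I_def by simp
  have iso: "pmod_iso sc Q V f ((*) :: 'k \<Rightarrow> 'k \<Rightarrow> 'k) (kI_space I) (kI_map I)"
    unfolding pmod_iso_def
  proof (rule exI[of _ \<phi>], intro conjI ballI allI impI)
    fix p assume p: "p \<in> Q"
    show "bij_betw (\<phi> p) (V p) (kI_space I p)"
    proof (cases "n p = 0")
      case True
      then have "V p = {0}" using VN[OF p] unfolding N_def by auto
      then show ?thesis using kIout[OF True] \<phi>0 unfolding bij_betw_def by auto
    next
      case False
      have "inj_on (\<phi> p) (V p)"
      proof (rule inj_onI)
        fix z w assume "z \<in> V p" "w \<in> V p" "\<phi> p z = \<phi> p w"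
        then show "z = w" using Vform[OF p] \<phi>c[OF False] by metis
      qed
      moreover have "\<phi> p ` V p = UNIV"
      proof -
        have "c \<in> \<phi> p ` V p" for c
        proof -
          have "sc c (n p) \<in> V p" using subspace_scale[OF Vsub[OF p] nV[rule_format, OF p]] .
          then show ?thesis using \<phi>c[OF False, of c] by (metis image_eqI)
        qed
        then show ?thesis by blast
      qed
      ultimately show ?thesis using kIin[OF p False] unfolding bij_betw_def by simp
    qed
  next
    fix p u w assume p: "p \<in> Q" and uw: "u \<in> V p" "w \<in> V p"
    obtain a where a: "u = sc a (n p)" using Vform[OF p uw(1)] by blast
    obtain b where b: "w = sc b (n p)" using Vform[OF p uw(2)] by blast
    have "u + w = sc (a + b) (n p)" using a b by (simp add: scale_left_distrib)
    then show "\<phi> p (u + w) = \<phi> p u + \<phi> p w"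
      using a b \<phi>c by (cases "n p = 0") (simp_all add: \<phi>_def)
  next
    fix p c w assume p: "p \<in> Q" and w: "w \<in> V p"
    obtain a where a: "w = sc a (n p)" using Vform[OF p w] by blast
    have "sc c w = sc (c * a) (n p)" using a by simp
    then show "\<phi> p (sc c w) = c * \<phi> p w"
      using a \<phi>c by (cases "n p = 0") (simp_all add: \<phi>_def)
  next
    fix p r z assume p: "p \<in> Q" "r \<in> Q" "p \<le> r" and z: "z \<in> V p"
    obtain a where a: "z = sc a (n p)" using Vform[OF p(1) z] by blast
    show "\<phi> r (f p r z) = kI_map I p r (\<phi> p z)"
    proof (cases "n p = 0")
      case True
      then have "z = 0" using a by simp
      then show ?thesis using f0[OF p] \<phi>0 unfolding kI_map_def by simp
    next
      case npz: False
      have fz: "f p r z = sc a (n r)" using a fsc[OF p nV[rule_format, OF p(1)]] ncoh p npz by simp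
      show ?thesis
      proof (cases "n r = 0")
        case True
        then show ?thesis using fz \<phi>0 unfolding kI_map_def I_def by simp
      next
        case False
        then show ?thesis using fz \<phi>c[OF False] \<phi>c[OF npz] a p npz unfolding kI_map_def I_def by simp
      qed
    qed
  qed
  have ival: "is_interval Q I"
    unfolding is_interval_def
  proof (intro conjI ballI impI)
    show "I \<subseteq> Q" unfolding I_def by blast
    show "I \<noteq> {}" using q nq unfolding I_def by blast
  next
    fix p r s assume ps: "p \<in> I" "r \<in> Q" "s \<in> I" and ord: "p \<le> r \<and> r \<le> s"
    have pQ: "p \<in> Q" "n p \<noteq> 0" "s \<in> Q" "n s \<noteq> 0" using ps unfolding I_def by auto
    have "n s = f p s (n p)" using ncoh pQ ord order_trans by metis
    also have "\<dots> = f r s (f p r (n p))" using fcomp[OF pQ(1) ps(2) pQ(3)] ord nV pQ(1) by simp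
    also have "\<dots> = f r s (n r)" using ncoh pQ ps(2) ord by simp
    finally have ns: "n s = f r s (n r)" .
    show "r \<in> I"
    proof (rule ccontr)
      assume "r \<notin> I"
      then have "n r = 0" using ps(2) unfolding I_def by simp
      then have "n s = 0" using ns f0 ps(2) pQ(3) ord by simp
      then show False using pQ by simp
    qed
  next
    fix p p' assume pp: "p \<in> I" "p' \<in> I"
    let ?R = "\<lambda>a b. a \<in> I \<and> b \<in> I \<and> (a \<le> b \<or> b \<le> a)"
    have qI: "q \<in> I" using q nq unfolding I_def by blast
    have "?R p q" using pp qI ncmp unfolding I_def by blast
    then have r1: "?R\<^sup>*\<^sup>* p q" by (rule r_into_rtranclp)
    have "?R q p'" using pp qI ncmp unfolding I_def by blast
    then have r2: "?R\<^sup>*\<^sup>* q p'" by (rule r_into_rtranclp)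
    show "?R\<^sup>*\<^sup>* p p'" using rtranclp_trans[OF r1 r2] .
  qed
  show ?thesis using ival iso by blast
qed

end


context pm
begin

lemma preim_sub:
  assumes "p \<in> Q" "r \<in> Q" "p \<le> r" "subspace S"
  shows "subspace {z\<in>V p. f p r z \<in> S}"
proof (rule subspaceI)
  show "0 \<in> {z \<in> V p. f p r z \<in> S}" using V0[OF assms(1)] f0[OF assms(1-3)] subspace_0[OF assms(4)] by simp
next
  fix a b assume "a \<in> {z \<in> V p. f p r z \<in> S}" "b \<in> {z \<in> V p. f p r z \<in> S}"
  then show "a + b \<in> {z \<in> V p. f p r z \<in> S}"
    using fadd[OF assms(1-3)] subspace_add[OF Vsub[OF assms(1)]] subspace_add[OF assms(4)] by simp
next
  fix c a assume "a \<in> {z \<in> V p. f p r z \<in> S}"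
  then show "sc c a \<in> {z \<in> V p. f p r z \<in> S}"
    using fsc[OF assms(1-3)] subspace_scale[OF Vsub[OF assms(1)]] subspace_scale[OF assms(4)] by simp
qed

lemma gdl:
  assumes indec: "indecomposable sc Q V f" and q: "q \<in> Q" and v: "v \<in> V q" "v \<noteq> 0"
  and H0: "subspace H0" "H0 \<subseteq> V q" "v \<notin> H0" "\<forall>z\<in>V q. \<exists>h\<in>H0. \<exists>c. z = h + sc c v"
  and Ld: "Ld \<subseteq> Q" "\<forall>p\<in>Ld. p \<le> q" "q \<in> Ld"
  and x: "\<forall>p\<in>Ld. x p \<in> V p \<and> f p q (x p) = v" "\<forall>p\<in>Ld. \<forall>p'\<in>Ld. p \<le> p' \<longrightarrow> f p p' (x p) = x p'"
  and Ldc: "\<forall>p\<in>Q. p \<le> q \<longrightarrow> p \<notin> Ld \<longrightarrow> f p q ` V p \<subseteq> H0"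
  and Lu: "Lu \<subseteq> Q" "\<forall>p\<in>Lu. q \<le> p" "q \<in> Lu"
  and Hs: "Hs q = H0"
    "\<forall>p\<in>Lu. subspace (Hs p) \<and> Hs p \<subseteq> V p \<and> f q p v \<notin> Hs p \<and> (\<forall>z\<in>V p. \<exists>h\<in>Hs p. \<exists>c. z = h + sc c (f q p v))"
    "\<forall>p\<in>Lu. \<forall>p'\<in>Lu. p \<le> p' \<longrightarrow> f p p' ` Hs p \<subseteq> Hs p'"
  and Luc: "\<forall>p\<in>Q. q \<le> p \<longrightarrow> p \<notin> Lu \<longrightarrow> f q p v = 0"
  and cmp: "\<forall>p\<in>Q. p \<le> q \<or> q \<le> p \<or> V p = {0}"
  shows "\<exists>I. is_interval Q I \<and> pmod_iso sc Q V f ((*) :: 'k \<Rightarrow> 'k \<Rightarrow> 'k) (kI_space I) (kI_map I)"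
proof -
  have Ldup: "\<And>p p'. p \<in> Ld \<Longrightarrow> p' \<in> Q \<Longrightarrow> p \<le> p' \<Longrightarrow> p' \<le> q \<Longrightarrow> p' \<in> Ld"
  proof (rule ccontr)
    fix p p' assume a: "p \<in> Ld" "p' \<in> Q" "p \<le> p'" "p' \<le> q" "p' \<notin> Ld"
    have pQ: "p \<in> Q" using a Ld by blast
    have "f p' q (f p p' (x p)) = v" using fcomp[OF pQ a(2) q a(3,4)] x a(1) by simp
    moreover have "f p p' (x p) \<in> V p'" using fV[OF pQ a(2,3)] x a(1) by blast
    ultimately have "v \<in> f p' q ` V p'" by (metis image_eqI)
    then show False using Ldc a H0(3) by blast
  qed
  have xq: "x q = v" using x(1) Ld(3) fid[OF q] by metis
  define n where "n p = (if p \<le> q then (if p \<in> Ld then x p else 0) else if q \<le> p then f q p v else 0)" for p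
  define C where "C p = (if p \<le> q then {z \<in> V p. f p q z \<in> H0} else if p \<in> Lu then Hs p else V p)" for p
  have nV: "\<forall>p\<in>Q. n p \<in> V p"
    unfolding n_def using x(1) V0 fV[OF q _ _ v(1)] by auto
  have ncoh: "\<forall>p\<in>Q. \<forall>p'\<in>Q. p \<le> p' \<longrightarrow> n p \<noteq> 0 \<longrightarrow> f p p' (n p) = n p'"
  proof (intro ballI impI)
    fix p p' assume p: "p \<in> Q" "p' \<in> Q" "p \<le> p'" and np: "n p \<noteq> 0"
    show "f p p' (n p) = n p'"
    proof (cases "p \<le> q")
      case pq: True
      then have pL: "p \<in> Ld" and nx: "n p = x p" using np unfolding n_def by (auto split: if_splits)
      show ?thesis
      proof (cases "p' \<le> q")
        case True
        then have "p' \<in> Ld" using Ldup pL p by blast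
        then show ?thesis using x(2) pL p(3) nx True unfolding n_def by simp
      next
        case p'q: False
        show ?thesis
        proof (cases "q \<le> p'")
          case True
          have xpV: "x p \<in> V p" "f p q (x p) = v" using x pL by auto
          have "f p p' (x p) = f q p' v" using fcomp[OF p(1) q p(2) pq True xpV(1)] xpV(2) by simp
          then show ?thesis using nx x pL p'q True unfolding n_def by simp
        next
          case False
          then have "V p' = {0}" using cmp p'q p(2) by blast
          moreover have "n p' = 0" unfolding n_def using p'q False by simp
          moreover have "f p p' (n p) \<in> V p'" using fV[OF p] nV p(1) by blast
          ultimately show ?thesis by simp
        qed
      qed
    next
      case pq: False
      then have qp: "q \<le> p" and nf: "n p = f q p v" using np unfolding n_def by (auto split: if_splits)
      have p'q: "\<not> p' \<le> q" using pq p(3) order_trans by blast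
      have qp': "q \<le> p'" using qp p(3) order_trans by blast
      show ?thesis using fcomp[OF q p(1) p(2) qp p(3) v(1)] nf p'q qp' unfolding n_def by simp
    qed
  qed
  have nq: "n q \<noteq> 0" unfolding n_def using xq Ld(3) v by simp
  have ncmp: "\<forall>p\<in>Q. n p \<noteq> 0 \<longrightarrow> p \<le> q \<or> q \<le> p" unfolding n_def by auto
  have Csub: "submod sc Q V f C"
    unfolding submod_def
  proof (intro conjI ballI impI)
    fix p assume p: "p \<in> Q"
    show "subspace (C p)" unfolding C_def using preim_sub[OF p q _ H0(1)] Hs(2) Vsub[OF p] by auto
    show "C p \<subseteq> V p" unfolding C_def using Hs(2) by auto
  next
    fix p p' z assume p: "p \<in> Q" "p' \<in> Q" "p \<le> p'" and z: "z \<in> C p"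
    show "f p p' z \<in> C p'"
    proof (cases "p \<le> q")
      case pq: True
      then have zV: "z \<in> V p" "f p q z \<in> H0" using z unfolding C_def by auto
      show ?thesis
      proof (cases "p' \<le> q")
        case True
        then show ?thesis using fcomp[OF p(1,2) q p(3) True zV(1)] fV[OF p zV(1)] zV(2) unfolding C_def by simp
      next
        case p'q: False
        show ?thesis
        proof (cases "p' \<in> Lu")
          case True
          then have qp': "q \<le> p'" using Lu by blast
          have "f p p' z = f q p' (f p q z)" using fcomp[OF p(1) q p(2) pq qp' zV(1)] by simp
          moreover have "f q p' (f p q z) \<in> Hs p'" using Hs(3) Lu(3) True qp' zV(2) Hs(1) by blast
          ultimately show ?thesis using p'q True unfolding C_def by simp
        next
          case False
          then show ?thesis using p'q fV[OF p zV(1)] unfolding C_def by simp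
        qed
      qed
    next
      case pq: False
      then have p'q: "\<not> p' \<le> q" using p(3) order_trans by blast
      show ?thesis
      proof (cases "p \<in> Lu")
        case pL: True
        then have zH: "z \<in> Hs p" using z pq unfolding C_def by simp
        show ?thesis
        proof (cases "p' \<in> Lu")
          case True
          have "f p p' z \<in> Hs p'" using Hs(3) pL True zH p(3) by blast
          then show ?thesis using p'q True unfolding C_def by simp
        next
          case False
          have "z \<in> V p" using Hs(2) pL zH by blast
          then have "f p p' z \<in> V p'" using fV[OF p] by blast
          then show ?thesis using p'q False unfolding C_def by simp
        qed
      next
        case pL: False
        then have zV: "z \<in> V p" using z pq unfolding C_def by simp
        show ?thesis
        proof (cases "p' \<in> Lu")
          case p'L: True
          then have qp': "q \<le> p'" using Lu by blast
          show ?thesis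
          proof (cases "q \<le> p")
            case True
            then have "f q p v = 0" using Luc pL p by blast
            then have "f q p' v = 0" using fcomp[OF q p(1) p(2) True p(3) v(1)] f0[OF p] by simp
            moreover have "0 \<in> Hs p'" using Hs(2) p'L subspace_0 by blast
            moreover have "f q p' v \<notin> Hs p'" using Hs(2) p'L by blast
            ultimately show ?thesis by simp
          next
            case False
            then have "V p = {0}" using cmp pq p by blast
            then have "z = 0" using zV by simp
            moreover have "0 \<in> Hs p'" using Hs(2) p'L subspace_0 by blast
            ultimately show ?thesis using f0[OF p] p'q p'L unfolding C_def by simp
          qed
        next
          case False
          then show ?thesis using fV[OF p zV] p'q unfolding C_def by simp
        qed
      qed
    qed
  qed
  have Cspan: "\<forall>p\<in>Q. \<forall>z\<in>V p. \<exists>c. \<exists>b\<in>C p. z = sc c (n p) + b"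
  proof (intro ballI)
    fix p z assume p: "p \<in> Q" and z: "z \<in> V p"
    show "\<exists>c. \<exists>b\<in>C p. z = sc c (n p) + b"
    proof (cases "p \<le> q")
      case pq: True
      show ?thesis
      proof (cases "p \<in> Ld")
        case pL: True
        have fz: "f p q z \<in> V q" using fV[OF p q pq z] .
        then obtain h c where hc: "h \<in> H0" "f p q z = h + sc c v" using H0(4) by blast
        have xV: "x p \<in> V p" "f p q (x p) = v" using x pL by auto
        define b where "b = z - sc c (x p)"
        have bV: "b \<in> V p" unfolding b_def using subspace_diff[OF Vsub[OF p] z subspace_scale[OF Vsub[OF p] xV(1)]] .
        have "f p q b = f p q z - sc c v"
          unfolding b_def using fdiff[OF p q pq z subspace_scale[OF Vsub[OF p] xV(1)]] fsc[OF p q pq xV(1)] xV(2) by simp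
        then have "f p q b = h" using hc by simp
        then have "b \<in> C p" using bV hc pq unfolding C_def by simp
        moreover have "z = sc c (n p) + b" unfolding b_def n_def using pq pL by simp
        ultimately show ?thesis by blast
      next
        case False
        then have "f p q z \<in> f p q ` V p" "f p q ` V p \<subseteq> H0" using Ldc p pq z by blast+
        then have "f p q z \<in> H0" by blast
        then have "z \<in> C p" using z pq unfolding C_def by simp
        moreover have "z = sc 0 (n p) + z" by simp
        ultimately show ?thesis by blast
      qed
    next
      case pq: False
      show ?thesis
      proof (cases "p \<in> Lu")
        case True
        then obtain h c where hc: "h \<in> Hs p" "z = h + sc c (f q p v)" using Hs(2) z by blast
        have "q \<le> p" using True Lu by blast
        then have "n p = f q p v" using pq unfolding n_def by simp
        moreover have "z = sc c (f q p v) + h" using hc(2) by (simp only: add.commute)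
        ultimately have "z = sc c (n p) + h" by simp
        moreover have "h \<in> C p" using hc pq True unfolding C_def by simp
        ultimately show ?thesis by blast
      next
        case False
        then have "z \<in> C p" using z pq unfolding C_def by simp
        moreover have "z = sc 0 (n p) + z" by simp
        ultimately show ?thesis by blast
      qed
    qed
  qed
  have Cint: "\<forall>p\<in>Q. \<forall>c. sc c (n p) \<in> C p \<longrightarrow> c = 0 \<or> n p = 0"
  proof (intro ballI allI impI)
    fix p c assume p: "p \<in> Q" and cn: "sc c (n p) \<in> C p"
    show "c = 0 \<or> n p = 0"
    proof (cases "p \<le> q")
      case pq: True
      show ?thesis
      proof (cases "p \<in> Ld")
        case pL: True
        have xV: "x p \<in> V p" "f p q (x p) = v" using x pL by auto
        have "f p q (sc c (x p)) \<in> H0" using cn pq pL unfolding C_def n_def by simp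
        then have "sc c v \<in> H0" using fsc[OF p q pq xV(1)] xV(2) by simp
        then show ?thesis using scale_mem_imp[OF H0(1)] H0(3) by blast
      next
        case False
        then show ?thesis using pq unfolding n_def by simp
      qed
    next
      case pq: False
      show ?thesis
      proof (cases "q \<le> p")
        case qp: True
        show ?thesis
        proof (cases "p \<in> Lu")
          case True
          then have "sc c (f q p v) \<in> Hs p" using cn pq qp unfolding C_def n_def by simp
          then show ?thesis using scale_mem_imp Hs(2) True by blast
        next
          case False
          then show ?thesis using Luc p qp pq unfolding n_def by simp
        qed
      next
        case False
        then show ?thesis using pq unfolding n_def by simp
      qed
    qed
  qed
  show ?thesis using from_family[OF indec q nV ncoh nq ncmp Csub Cspan Cint] .
qed

end


lemma zorn_helper:
  assumes "G0 \<in> A"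
    and "\<And>C. C \<subseteq> A \<Longrightarrow> C \<noteq> {} \<Longrightarrow> (\<And>X Y. X \<in> C \<Longrightarrow> Y \<in> C \<Longrightarrow> X \<subseteq> Y \<or> Y \<subseteq> X) \<Longrightarrow> \<Union>C \<in> A"
  shows "\<exists>M\<in>A. \<forall>X\<in>A. M \<subseteq> X \<longrightarrow> X = M"
proof (rule Zorn_Lemma2, intro ballI)
  fix C assume C: "C \<in> chains A"
  show "\<exists>U\<in>A. \<forall>X\<in>C. X \<subseteq> U"
  proof (cases "C = {}")
    case True then show ?thesis using assms(1) by blast
  next
    case False
    have "\<Union>C \<in> A" using assms(2)[OF chainsD2[OF C] False] chainsD[OF C] by blast
    then show ?thesis by blast
  qed
qed

context pm
begin

lemma img_sub:
  assumes "p \<in> Q" "r \<in> Q" "p \<le> r" "subspace S" "S \<subseteq> V p"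
  shows "subspace (f p r ` S)"
proof (rule subspaceI)
  have "f p r 0 = 0" using f0[OF assms(1-3)] .
  then show "0 \<in> f p r ` S" using subspace_0[OF assms(4)] by (metis image_eqI)
next
  fix a b assume "a \<in> f p r ` S" "b \<in> f p r ` S"
  then obtain a' b' where ab: "a' \<in> S" "b' \<in> S" "a = f p r a'" "b = f p r b'" by blast
  have "a' \<in> V p" "b' \<in> V p" using ab assms(5) by auto
  then have "a + b = f p r (a' + b')" using fadd[OF assms(1-3)] ab by simp
  then show "a + b \<in> f p r ` S" using subspace_add[OF assms(4) ab(1,2)] by blast
next
  fix c a assume "a \<in> f p r ` S"
  then obtain a' where ab: "a' \<in> S" "a = f p r a'" by blast
  have "a' \<in> V p" using ab assms(5) by auto
  then have "sc c a = f p r (sc c a')" using fsc[OF assms(1-3)] ab by simp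
  then show "sc c a \<in> f p r ` S" using subspace_scale[OF assms(4) ab(1)] by blast
qed

lemma fpp_img: "p \<in> Q \<Longrightarrow> f p p ` V p = V p"
  using fid by (auto simp: image_iff)

end


context pm
begin

lemma lift:
  assumes q: "q \<in> Q" and v: "v \<in> V q" "v \<noteq> 0"
  and L: "L \<subseteq> Q" "q \<in> L" "\<forall>p\<in>L. p \<le> q" "\<forall>p\<in>L. v \<in> f p q ` V p"
  and chd: "\<And>p a b. p \<in> L \<Longrightarrow> p \<noteq> q \<Longrightarrow> a \<in> L \<Longrightarrow> b \<in> L \<Longrightarrow> a \<le> p \<Longrightarrow> b \<le> p \<Longrightarrow> a \<le> b \<or> b \<le> a"
  and chu: "\<And>p a b. p \<in> L \<Longrightarrow> p \<noteq> q \<Longrightarrow> a \<in> L \<Longrightarrow> b \<in> L \<Longrightarrow> p \<le> a \<Longrightarrow> p \<le> b \<Longrightarrow> a \<le> b \<or> b \<le> a"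
  shows "\<exists>x. (\<forall>p\<in>L. x p \<in> V p \<and> f p q (x p) = v) \<and> (\<forall>p\<in>L. \<forall>p'\<in>L. p \<le> p' \<longrightarrow> f p p' (x p) = x p')"
proof -
  have LQ: "\<And>p. p \<in> L \<Longrightarrow> p \<in> Q" using L(1) by blast
  define E where "E p = \<Inter> {f p' p ` V p' | p'. p' \<in> L \<and> p' \<le> p}" for p
  have EV: "\<And>p. p \<in> L \<Longrightarrow> E p \<subseteq> V p"
  proof -
    fix p assume p: "p \<in> L"
    have "f p p ` V p \<in> {f p' p ` V p' | p'. p' \<in> L \<and> p' \<le> p}" using p by blast
    then show "E p \<subseteq> V p" unfolding E_def using fpp_img[OF LQ[OF p]] by blast
  qed
  have Emono: "\<And>p r y. p \<in> L \<Longrightarrow> r \<in> L \<Longrightarrow> r \<noteq> q \<Longrightarrow> p \<le> r \<Longrightarrow> y \<in> E p \<Longrightarrow> f p r y \<in> E r"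
  proof -
    fix p r y assume a: "p \<in> L" "r \<in> L" "r \<noteq> q" "p \<le> r" "y \<in> E p"
    have yV: "y \<in> V p" using EV[OF a(1)] a(5) by blast
    show "f p r y \<in> E r" unfolding E_def
    proof (rule InterI)
      fix X assume "X \<in> {f p' r ` V p' | p'. p' \<in> L \<and> p' \<le> r}"
      then obtain p' where p': "X = f p' r ` V p'" "p' \<in> L" "p' \<le> r" by blast
      show "f p r y \<in> X"
      proof (cases "p' \<le> p")
        case True
        then have "y \<in> f p' p ` V p'" using a(5) p'(2) unfolding E_def by blast
        then obtain w where w: "w \<in> V p'" "y = f p' p w" by blast
        then have "f p r y = f p' r w" using fcomp[OF LQ[OF p'(2)] LQ[OF a(1)] LQ[OF a(2)] True a(4) w(1)] by simp
        then show ?thesis using p'(1) w(1) by blast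
      next
        case False
        then have "p \<le> p'" using chd[OF a(2,3) a(1) p'(2) a(4) p'(3)] by blast
        then have "f p r y = f p' r (f p p' y)" using fcomp[OF LQ[OF a(1)] LQ[OF p'(2)] LQ[OF a(2)] _ p'(3) yV] by simp
        moreover have "f p p' y \<in> V p'" using fV[OF LQ[OF a(1)] LQ[OF p'(2)] \<open>p \<le> p'\<close> yV] .
        ultimately show ?thesis using p'(1) by blast
      qed
    qed
  qed
  define A where "A = {G. G \<subseteq> L \<times> UNIV \<and> (q,v) \<in> G \<and> (\<forall>p y. (p,y) \<in> G \<longrightarrow> y \<in> E p) \<and>
      (\<forall>p y p' y'. (p,y) \<in> G \<longrightarrow> (p',y') \<in> G \<longrightarrow> p \<le> p' \<longrightarrow> f p p' y = y') \<and>
      (\<forall>p y p'. (p,y) \<in> G \<longrightarrow> p' \<in> L \<longrightarrow> p \<le> p' \<longrightarrow> (\<exists>y'. (p',y') \<in> G))}"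
  have vE: "v \<in> E q" unfolding E_def using L(4) by blast
  have G0: "{(q,v)} \<in> A"
    unfolding A_def using L(2,3) vE fid[OF q v(1)] antisym by auto
  have chains: "\<And>C. C \<subseteq> A \<Longrightarrow> C \<noteq> {} \<Longrightarrow> (\<And>X Y. X \<in> C \<Longrightarrow> Y \<in> C \<Longrightarrow> X \<subseteq> Y \<or> Y \<subseteq> X) \<Longrightarrow> \<Union>C \<in> A"
  proof -
    fix C assume C: "C \<subseteq> A" "C \<noteq> {}" and ch: "\<And>X Y. X \<in> C \<Longrightarrow> Y \<in> C \<Longrightarrow> X \<subseteq> Y \<or> Y \<subseteq> X"
    have CA: "\<And>X. X \<in> C \<Longrightarrow> X \<in> A" using C(1) by blast
    have a1: "\<Union>C \<subseteq> L \<times> UNIV" using CA unfolding A_def by blast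
    have a2: "(q,v) \<in> \<Union>C" using CA C(2) unfolding A_def by blast
    have a3: "\<forall>p y. (p,y) \<in> \<Union>C \<longrightarrow> y \<in> E p" using CA unfolding A_def by blast
    have a4: "\<forall>p y p' y'. (p,y) \<in> \<Union>C \<longrightarrow> (p',y') \<in> \<Union>C \<longrightarrow> p \<le> p' \<longrightarrow> f p p' y = y'"
    proof (intro allI impI)
      fix p y p' y' assume "(p,y) \<in> \<Union>C" "(p',y') \<in> \<Union>C" "p \<le> p'"
      then obtain X Y where XY: "X \<in> C" "Y \<in> C" "(p,y) \<in> X" "(p',y') \<in> Y" by blast
      then have "(p,y) \<in> X \<union> Y" "(p',y') \<in> X \<union> Y" by auto
      moreover have "X \<union> Y \<in> C" using ch[OF XY(1,2)] XY(1,2) by (metis sup.absorb1 sup.absorb2)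
      ultimately show "f p p' y = y'" using CA \<open>p \<le> p'\<close> unfolding A_def by blast
    qed
    have a5: "\<forall>p y p'. (p,y) \<in> \<Union>C \<longrightarrow> p' \<in> L \<longrightarrow> p \<le> p' \<longrightarrow> (\<exists>y'. (p',y') \<in> \<Union>C)"
    proof (intro allI impI)
      fix p y p' assume "(p,y) \<in> \<Union>C" "p' \<in> L" "p \<le> p'"
      then obtain X where "X \<in> C" "(p,y) \<in> X" by blast
      then obtain y' where "(p',y') \<in> X" using CA \<open>p' \<in> L\<close> \<open>p \<le> p'\<close> unfolding A_def by blast
      then show "\<exists>y'. (p',y') \<in> \<Union>C" using \<open>X \<in> C\<close> by blast
    qed
    show "\<Union>C \<in> A" unfolding A_def using a1 a2 a3 a4 a5 by blast
  qed
  obtain M where M: "M \<in> A" and Mmax: "\<forall>X\<in>A. M \<subseteq> X \<longrightarrow> X = M"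
    using zorn_helper[OF G0 chains] by blast
  have M1: "M \<subseteq> L \<times> UNIV" and M2: "(q,v) \<in> M" and M3: "\<And>p y. (p,y) \<in> M \<Longrightarrow> y \<in> E p"
    and M4: "\<And>p y p' y'. (p,y) \<in> M \<Longrightarrow> (p',y') \<in> M \<Longrightarrow> p \<le> p' \<Longrightarrow> f p p' y = y'"
    and M5: "\<And>p y p'. (p,y) \<in> M \<Longrightarrow> p' \<in> L \<Longrightarrow> p \<le> p' \<Longrightarrow> \<exists>y'. (p',y') \<in> M"
    using M unfolding A_def by blast+
  have full: "\<forall>p\<in>L. \<exists>y. (p,y) \<in> M"
  proof (rule ccontr)
    assume "\<not> (\<forall>p\<in>L. \<exists>y. (p,y) \<in> M)"
    then obtain p where p: "p \<in> L" "\<And>y. (p,y) \<notin> M" by blast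
    have pq: "p \<noteq> q" using p(2) M2 by blast
    have pQ: "p \<in> Q" using LQ[OF p(1)] .
    have notle: "\<And>u y. (u,y) \<in> M \<Longrightarrow> \<not> u \<le> p"
      using M5 p by blast
    obtain B where B: "finite B" "V p = span B" using finV[OF pQ] by blast
    have Efam: "\<exists>S\<in>{f p' p ` V p' | p'. p' \<in> L \<and> p' \<le> p}. \<forall>T\<in>{f p' p ` V p' | p'. p' \<in> L \<and> p' \<le> p}. S \<subseteq> T"
    proof (rule chain_subspace_min[OF B(1)])
      show "{f p' p ` V p' | p'. p' \<in> L \<and> p' \<le> p} \<noteq> {}" using p(1) by blast
    next
      fix S assume "S \<in> {f p' p ` V p' | p'. p' \<in> L \<and> p' \<le> p}"
      then obtain p' where "S = f p' p ` V p'" "p' \<in> L" "p' \<le> p" by blast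
      then show "subspace S \<and> S \<subseteq> span B"
        using img_sub[OF LQ[OF \<open>p' \<in> L\<close>] pQ \<open>p' \<le> p\<close> Vsub[OF LQ[OF \<open>p' \<in> L\<close>]]] fV[OF LQ[OF \<open>p' \<in> L\<close>] pQ \<open>p' \<le> p\<close>] B(2)
        by auto
    next
      fix S T assume "S \<in> {f p' p ` V p' | p'. p' \<in> L \<and> p' \<le> p}" "T \<in> {f p' p ` V p' | p'. p' \<in> L \<and> p' \<le> p}"
      then obtain a b where ab: "S = f a p ` V a" "a \<in> L" "a \<le> p" "T = f b p ` V b" "b \<in> L" "b \<le> p" by blast
      have sub: "\<And>a b. a \<in> L \<Longrightarrow> b \<in> L \<Longrightarrow> a \<le> b \<Longrightarrow> b \<le> p \<Longrightarrow> f a p ` V a \<subseteq> f b p ` V b"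
      proof
        fix a b z assume ab: "a \<in> L" "b \<in> L" "a \<le> b" "b \<le> p" "z \<in> f a p ` V a"
        then obtain w where w: "w \<in> V a" "z = f a p w" by blast
        then have "z = f b p (f a b w)" using fcomp[OF LQ[OF ab(1)] LQ[OF ab(2)] pQ ab(3,4) w(1)] by simp
        moreover have "f a b w \<in> V b" using fV[OF LQ[OF ab(1)] LQ[OF ab(2)] ab(3) w(1)] .
        ultimately show "z \<in> f b p ` V b" by blast
      qed
      show "S \<subseteq> T \<or> T \<subseteq> S" using chd[OF p(1) pq ab(2) ab(5) ab(3) ab(6)] sub ab by blast
    qed
    then obtain p0 where p0: "p0 \<in> L" "p0 \<le> p" "\<forall>T\<in>{f p' p ` V p' | p'. p' \<in> L \<and> p' \<le> p}. f p0 p ` V p0 \<subseteq> T"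
      by blast
    have Ep: "E p = f p0 p ` V p0"
    proof
      show "E p \<subseteq> f p0 p ` V p0" unfolding E_def using p0 by blast
      show "f p0 p ` V p0 \<subseteq> E p" unfolding E_def using p0(3) by blast
    qed
    have Epsub: "subspace (E p)" using Ep img_sub[OF LQ[OF p0(1)] pQ p0(2) Vsub[OF LQ[OF p0(1)]]] by simp
    define T where "T u y = {z \<in> E p. f p u z \<in> range (\<lambda>c. sc c y)}" for u y
    define \<TT> where "\<TT> = {T u y | u y. (u,y) \<in> M \<and> p \<le> u}"
    have Tsub: "\<And>u y. (u,y) \<in> M \<Longrightarrow> p \<le> u \<Longrightarrow> subspace (T u y) \<and> T u y \<subseteq> span B"
    proof -
      fix u y assume uy: "(u,y) \<in> M" "p \<le> u"
      have uQ: "u \<in> Q" using M1 uy LQ by blast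
      have "subspace (range (\<lambda>c. sc c y))" using subspace_span[of "{y}"] span_singleton by simp
      then have s1: "subspace {z\<in>V p. f p u z \<in> range (\<lambda>c. sc c y)}" using preim_sub[OF pQ uQ uy(2)] by blast
      have "T u y = E p \<inter> {z\<in>V p. f p u z \<in> range (\<lambda>c. sc c y)}" unfolding T_def using EV[OF p(1)] by blast
      then have "subspace (T u y)" using subspace_inter[OF Epsub s1] by simp
      moreover have "T u y \<subseteq> span B" unfolding T_def using EV[OF p(1)] B(2) by blast
      ultimately show "subspace (T u y) \<and> T u y \<subseteq> span B" by blast
    qed
    have Tmono: "\<And>u y u' y'. (u,y) \<in> M \<Longrightarrow> (u',y') \<in> M \<Longrightarrow> p \<le> u \<Longrightarrow> u \<le> u' \<Longrightarrow> T u y \<subseteq> T u' y'"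
    proof
      fix u y u' y' z assume a: "(u,y) \<in> M" "(u',y') \<in> M" "p \<le> u" "u \<le> u'" "z \<in> T u y"
      have uQ: "u \<in> Q" "u' \<in> Q" using M1 a(1,2) LQ by blast+
      have zV: "z \<in> V p" using a(5) EV[OF p(1)] unfolding T_def by blast
      obtain c where c: "f p u z = sc c y" using a(5) unfolding T_def by blast
      have yV: "y \<in> V u" using M3[OF a(1)] EV M1 a(1) by blast
      have "f p u' z = f u u' (f p u z)" using fcomp[OF pQ uQ(1) uQ(2) a(3,4) zV] by simp
      also have "\<dots> = sc c (f u u' y)" using c fsc[OF uQ(1) uQ(2) a(4) yV] by simp
      also have "\<dots> = sc c y'" using M4[OF a(1,2,4)] by simp
      finally show "z \<in> T u' y'" using a(5) unfolding T_def by blast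
    qed
    obtain T0 where T0: "T0 \<in> \<TT>" "\<forall>T'\<in>\<TT>. T0 \<subseteq> T'"
    proof -
      have "\<exists>S\<in>\<TT>. \<forall>T'\<in>\<TT>. S \<subseteq> T'"
      proof (rule chain_subspace_min[OF B(1)])
        show "\<TT> \<noteq> {}" unfolding \<TT>_def using M2 p(1) L(3) by blast
      next
        fix S assume "S \<in> \<TT>" then show "subspace S \<and> S \<subseteq> span B" unfolding \<TT>_def using Tsub by blast
      next
        fix S S' assume "S \<in> \<TT>" "S' \<in> \<TT>"
        then obtain u y u' y' where a: "S = T u y" "(u,y) \<in> M" "p \<le> u" "S' = T u' y'" "(u',y') \<in> M" "p \<le> u'"
          unfolding \<TT>_def by blast
        have "u \<in> L" "u' \<in> L" using a M1 by blast+
        then have "u \<le> u' \<or> u' \<le> u" using chu[OF p(1) pq] a(3,6) by blast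
        then show "S \<subseteq> S' \<or> S' \<subseteq> S" using Tmono a by blast
      qed
      then show ?thesis using that by blast
    qed
    then obtain u0 y0 where u0: "T0 = T u0 y0" "(u0,y0) \<in> M" "p \<le> u0" unfolding \<TT>_def by blast
    have u0L: "u0 \<in> L" using u0 M1 by blast
    have y0V: "y0 \<in> V u0" using M3[OF u0(2)] EV[OF u0L] by blast
    have y0nz: "y0 \<noteq> 0"
    proof
      assume "y0 = 0"
      then have "f u0 q y0 = 0" using f0[OF LQ[OF u0L] q] L(3) u0L by simp
      moreover have "f u0 q y0 = v" using M4[OF u0(2) M2] L(3) u0L by blast
      ultimately show False using v(2) by simp
    qed
    have "y0 \<in> f p0 u0 ` V p0" using M3[OF u0(2)] p0(1,2) u0(3) order_trans unfolding E_def by blast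
    then obtain w where w: "w \<in> V p0" "y0 = f p0 u0 w" by blast
    define z where "z = f p0 p w"
    have zE: "z \<in> E p" using Ep w(1) unfolding z_def by blast
    have zV: "z \<in> V p" using zE EV[OF p(1)] by blast
    have zu0: "f p u0 z = y0" unfolding z_def using fcomp[OF LQ[OF p0(1)] pQ LQ[OF u0L] p0(2) u0(3) w(1)] w(2) by simp
    have "sc 1 y0 \<in> range (\<lambda>c. sc c y0)" by (rule rangeI)
    then have "f p u0 z \<in> range (\<lambda>c. sc c y0)" using zu0 by simp
    then have zT0: "z \<in> T0" unfolding u0(1) T_def using zE by blast
    have zall: "\<And>u y. (u,y) \<in> M \<Longrightarrow> p \<le> u \<Longrightarrow> f p u z = y"
    proof -
      fix u y assume uy: "(u,y) \<in> M" "p \<le> u"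
      have uL: "u \<in> L" using uy M1 by blast
      have "T u y \<in> \<TT>" unfolding \<TT>_def using uy by blast
      then have "z \<in> T u y" using T0(2) zT0 by blast
      then obtain c where c: "f p u z = sc c y" unfolding T_def by blast
      have "u \<le> u0 \<or> u0 \<le> u" using chu[OF p(1) pq uL u0L uy(2) u0(3)] .
      then show "f p u z = y"
      proof
        assume uu0: "u0 \<le> u"
        have "f p u z = f u0 u (f p u0 z)" using fcomp[OF pQ LQ[OF u0L] LQ[OF uL] u0(3) uu0 zV] by simp
        then show ?thesis using zu0 M4[OF u0(2) uy(1) uu0] by simp
      next
        assume uu0: "u \<le> u0"
        have yV: "y \<in> V u" using M3[OF uy(1)] EV[OF uL] by blast
        have "y0 = f u u0 (f p u z)" using fcomp[OF pQ LQ[OF uL] LQ[OF u0L] uy(2) uu0 zV] zu0 by simp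
        also have "\<dots> = sc c (f u u0 y)" using c fsc[OF LQ[OF uL] LQ[OF u0L] uu0 yV] by simp
        also have "\<dots> = sc c y0" using M4[OF uy(1) u0(2) uu0] by simp
        finally have "sc c y0 = y0" by simp
        then have "c = 1" using scale_eq_self y0nz by blast
        then show ?thesis using c by simp
      qed
    qed
    define M' where "M' = M \<union> {(r, f p r z) | r. r \<in> L \<and> p \<le> r \<and> (\<forall>y. (r,y) \<notin> M)}"
    have newD: "\<And>r y. (r,y) \<in> M' \<Longrightarrow> (r,y) \<notin> M \<Longrightarrow> r \<in> L \<and> p \<le> r \<and> y = f p r z \<and> (\<forall>y. (r,y) \<notin> M)"
      unfolding M'_def by blast
    have M'A: "M' \<in> A"
      unfolding A_def
    proof (intro CollectI conjI allI impI)
      show "M' \<subseteq> L \<times> UNIV" using M1 unfolding M'_def by blast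
      show "(q,v) \<in> M'" using M2 unfolding M'_def by blast
    next
      fix r y assume ry: "(r,y) \<in> M'"
      show "y \<in> E r"
      proof (cases "(r,y) \<in> M")
        case True then show ?thesis using M3 by blast
      next
        case False
        then have r: "r \<in> L" "p \<le> r" "y = f p r z" "\<forall>y. (r,y) \<notin> M" using newD ry by blast+
        have "r \<noteq> q" using r(4) M2 by blast
        then show ?thesis using Emono[OF p(1) r(1) _ r(2) zE] r(3) by blast
      qed
    next
      fix r y r' y' assume ry: "(r,y) \<in> M'" "(r',y') \<in> M'" "r \<le> r'"
      show "f r r' y = y'"
      proof (cases "(r,y) \<in> M")
        case rM: True
        show ?thesis
        proof (cases "(r',y') \<in> M")
          case True then show ?thesis using M4 rM ry(3) by blast
        next
          case False
          then have r': "r' \<in> L" "p \<le> r'" "\<forall>y. (r',y) \<notin> M" using newD ry(2) by blast+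
          then show ?thesis using M5[OF rM r'(1) ry(3)] by blast
        qed
      next
        case rM: False
        then have r: "r \<in> L" "p \<le> r" "y = f p r z" using newD ry(1) by blast+
        show ?thesis
        proof (cases "(r',y') \<in> M")
          case True
          have pr': "p \<le> r'" using r(2) ry(3) order_trans by blast
          have "f r r' y = f p r' z" using fcomp[OF pQ LQ[OF r(1)] _ r(2) ry(3) zV] r(3) True M1 LQ by blast
          then show ?thesis using zall[OF True pr'] by simp
        next
          case False
          then have r': "r' \<in> L" "y' = f p r' z" using newD ry(2) by blast+
          then show ?thesis using fcomp[OF pQ LQ[OF r(1)] LQ[OF r'(1)] r(2) ry(3) zV] r(3) by simp
        qed
      qed
    next
      fix r y r' assume ry: "(r,y) \<in> M'" "r' \<in> L" "r \<le> r'"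
      show "\<exists>y'. (r',y') \<in> M'"
      proof (cases "\<exists>y'. (r',y') \<in> M")
        case True then show ?thesis unfolding M'_def by blast
      next
        case False
        have "p \<le> r'"
        proof (cases "(r,y) \<in> M")
          case True then show ?thesis using M5[OF True ry(2,3)] False by blast
        next
          case False then show ?thesis using newD ry(1) ry(3) order_trans by blast
        qed
        then show ?thesis using False ry(2) unfolding M'_def by blast
      qed
    qed
    have "M \<subseteq> M'" unfolding M'_def by blast
    then have "M' = M" using Mmax M'A by blast
    moreover have "(p, f p p z) \<in> M'" using p unfolding M'_def by blast
    ultimately show False using p(2) by blast
  qed
  define x where "x p = (SOME y. (p,y) \<in> M)" for p
  have xM: "\<And>p. p \<in> L \<Longrightarrow> (p, x p) \<in> M" unfolding x_def using full someI_ex by metis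
  show ?thesis
  proof (intro exI conjI ballI impI)
    fix p assume p: "p \<in> L"
    show "x p \<in> V p" using M3[OF xM[OF p]] EV[OF p] by blast
    show "f p q (x p) = v" using M4[OF xM[OF p] M2] L(3) p by blast
  next
    fix p p' assume "p \<in> L" "p' \<in> L" "p \<le> p'"
    then show "f p p' (x p) = x p'" using M4 xM by blast
  qed
qed

end


context pm
begin

lemma hyp:
  assumes q: "q \<in> Q" and v: "v \<in> V q"
  and L: "L \<subseteq> Q" "q \<in> L" "\<forall>p\<in>L. q \<le> p"
  and H0: "subspace H0" "H0 \<subseteq> V q" "v \<notin> H0" "\<forall>z\<in>V q. \<exists>h\<in>H0. \<exists>c. z = h + sc c v"
  and K0: "\<forall>r\<in>L. \<forall>z\<in>V q. f q r z = 0 \<longrightarrow> z \<in> H0"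
  and chd: "\<And>p a b. p \<in> L \<Longrightarrow> p \<noteq> q \<Longrightarrow> a \<in> L \<Longrightarrow> b \<in> L \<Longrightarrow> a \<le> p \<Longrightarrow> b \<le> p \<Longrightarrow> a \<le> b \<or> b \<le> a"
  and chu: "\<And>p a b. p \<in> L \<Longrightarrow> p \<noteq> q \<Longrightarrow> a \<in> L \<Longrightarrow> b \<in> L \<Longrightarrow> p \<le> a \<Longrightarrow> p \<le> b \<Longrightarrow> a \<le> b \<or> b \<le> a"
  shows "\<exists>Hs. Hs q = H0 \<and>
    (\<forall>p\<in>L. subspace (Hs p) \<and> Hs p \<subseteq> V p \<and> f q p v \<notin> Hs p \<and> (\<forall>z\<in>V p. \<exists>h\<in>Hs p. \<exists>c. z = h + sc c (f q p v))) \<and>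
    (\<forall>p\<in>L. \<forall>p'\<in>L. p \<le> p' \<longrightarrow> f p p' ` Hs p \<subseteq> Hs p')"
proof -
  have LQ: "\<And>p. p \<in> L \<Longrightarrow> p \<in> Q" using L(1) by blast
  define w where "w p = f q p v" for p
  have wV: "\<And>p. p \<in> L \<Longrightarrow> w p \<in> V p" unfolding w_def using fV[OF q LQ _ v] L(3) by blast
  have wtr: "\<And>d p. d \<in> L \<Longrightarrow> p \<in> L \<Longrightarrow> d \<le> p \<Longrightarrow> f d p (w d) = w p"
    unfolding w_def using fcomp[OF q LQ LQ _ _ v] L(3) by blast
  define good where "good p H \<longleftrightarrow> subspace H \<and> H \<subseteq> V p \<and> w p \<notin> H \<and> (\<forall>z\<in>V p. \<exists>h\<in>H. \<exists>c. z = h + sc c (w p)) \<and>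
      (\<forall>r\<in>L. p \<le> r \<longrightarrow> (\<forall>z\<in>V p. f p r z = 0 \<longrightarrow> z \<in> H))" for p H
  define A where "A = {G. G \<subseteq> L \<times> UNIV \<and> (q,H0) \<in> G \<and> (\<forall>p H. (p,H) \<in> G \<longrightarrow> good p H) \<and>
      (\<forall>p H p' H'. (p,H) \<in> G \<longrightarrow> (p',H') \<in> G \<longrightarrow> p \<le> p' \<longrightarrow> f p p' ` H \<subseteq> H') \<and>
      (\<forall>p H p'. (p,H) \<in> G \<longrightarrow> p' \<in> L \<longrightarrow> p' \<le> p \<longrightarrow> (\<exists>H'. (p',H') \<in> G))}"
  have A1: "\<And>X. X \<in> A \<Longrightarrow> X \<subseteq> L \<times> UNIV" unfolding A_def by simp
  have A2: "\<And>X. X \<in> A \<Longrightarrow> (q,H0) \<in> X" unfolding A_def by simp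
  have A3: "\<And>X p H. X \<in> A \<Longrightarrow> (p,H) \<in> X \<Longrightarrow> good p H" unfolding A_def by simp
  have A4: "\<And>X p H p' H'. X \<in> A \<Longrightarrow> (p,H) \<in> X \<Longrightarrow> (p',H') \<in> X \<Longrightarrow> p \<le> p' \<Longrightarrow> f p p' ` H \<subseteq> H'"
    unfolding A_def by simp
  have A5: "\<And>X p H p'. X \<in> A \<Longrightarrow> (p,H) \<in> X \<Longrightarrow> p' \<in> L \<Longrightarrow> p' \<le> p \<Longrightarrow> \<exists>H'. (p',H') \<in> X"
  proof -
    fix X p H p' assume a: "X \<in> A" "(p,H) \<in> X" "p' \<in> L" "p' \<le> p"
    have "\<forall>p H p'. (p,H) \<in> X \<longrightarrow> p' \<in> L \<longrightarrow> p' \<le> p \<longrightarrow> (\<exists>H'. (p',H') \<in> X)"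
      using a(1) unfolding A_def mem_Collect_eq by (elim conjE)
    then show "\<exists>H'. (p',H') \<in> X" using a(2-4) by blast
  qed
  have AI: "\<And>X. X \<subseteq> L \<times> UNIV \<Longrightarrow> (q,H0) \<in> X \<Longrightarrow> (\<forall>p H. (p,H) \<in> X \<longrightarrow> good p H) \<Longrightarrow>
      (\<forall>p H p' H'. (p,H) \<in> X \<longrightarrow> (p',H') \<in> X \<longrightarrow> p \<le> p' \<longrightarrow> f p p' ` H \<subseteq> H') \<Longrightarrow>
      (\<forall>p H p'. (p,H) \<in> X \<longrightarrow> p' \<in> L \<longrightarrow> p' \<le> p \<longrightarrow> (\<exists>H'. (p',H') \<in> X)) \<Longrightarrow> X \<in> A"
    unfolding A_def by simp
  have wq: "w q = v" unfolding w_def using fid[OF q v] .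
  have goodq: "good q H0" unfolding good_def using H0 K0 wq by simp
  have G0: "{(q,H0)} \<in> A"
  proof -
    have "f q q ` H0 \<subseteq> H0" using fid[OF q] H0(2) by auto
    moreover have "\<forall>p H p'. (p,H) \<in> {(q,H0)} \<longrightarrow> p' \<in> L \<longrightarrow> p' \<le> p \<longrightarrow> (\<exists>H'. (p',H') \<in> {(q,H0)})"
      using L(3) antisym by blast
    ultimately show ?thesis using AI[of "{(q,H0)}"] L(2) goodq by blast
  qed
  have chains: "\<And>C. C \<subseteq> A \<Longrightarrow> C \<noteq> {} \<Longrightarrow> (\<And>X Y. X \<in> C \<Longrightarrow> Y \<in> C \<Longrightarrow> X \<subseteq> Y \<or> Y \<subseteq> X) \<Longrightarrow> \<Union>C \<in> A"
  proof -
    fix C assume C: "C \<subseteq> A" "C \<noteq> {}" and ch: "\<And>X Y. X \<in> C \<Longrightarrow> Y \<in> C \<Longrightarrow> X \<subseteq> Y \<or> Y \<subseteq> X"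
    have CA: "\<And>X. X \<in> C \<Longrightarrow> X \<in> A" using C(1) by blast
    have AD: "\<And>X. X \<in> C \<Longrightarrow> X \<subseteq> L \<times> UNIV \<and> (q,H0) \<in> X \<and> (\<forall>p H. (p,H) \<in> X \<longrightarrow> good p H)"
    proof -
      fix X assume "X \<in> C"
      then have "X \<in> A" using CA by blast
      then show "X \<subseteq> L \<times> UNIV \<and> (q,H0) \<in> X \<and> (\<forall>p H. (p,H) \<in> X \<longrightarrow> good p H)"
        using A1 A2 A3 by blast
    qed
    have a1: "\<Union>C \<subseteq> L \<times> UNIV" using AD by blast
    have a2: "(q,H0) \<in> \<Union>C" using AD C(2) by blast
    have a3: "\<forall>p H. (p,H) \<in> \<Union>C \<longrightarrow> good p H" using AD by blast
    have a4: "\<forall>p H p' H'. (p,H) \<in> \<Union>C \<longrightarrow> (p',H') \<in> \<Union>C \<longrightarrow> p \<le> p' \<longrightarrow> f p p' ` H \<subseteq> H'"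
    proof (intro allI impI)
      fix p H p' H' assume "(p,H) \<in> \<Union>C" "(p',H') \<in> \<Union>C" "p \<le> p'"
      then obtain X Y where XY: "X \<in> C" "Y \<in> C" "(p,H) \<in> X" "(p',H') \<in> Y" by blast
      then have "(p,H) \<in> X \<union> Y" "(p',H') \<in> X \<union> Y" by auto
      moreover have "X \<union> Y \<in> C" using ch[OF XY(1,2)] XY(1,2) by (metis sup.absorb1 sup.absorb2)
      ultimately show "f p p' ` H \<subseteq> H'" using A4[OF CA] \<open>p \<le> p'\<close> by blast
    qed
    have a5: "\<forall>p H p'. (p,H) \<in> \<Union>C \<longrightarrow> p' \<in> L \<longrightarrow> p' \<le> p \<longrightarrow> (\<exists>H'. (p',H') \<in> \<Union>C)"
    proof (intro allI impI)
      fix p H p' assume "(p,H) \<in> \<Union>C" "p' \<in> L" "p' \<le> p"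
      then obtain X where "X \<in> C" "(p,H) \<in> X" by blast
      then obtain H' where "(p',H') \<in> X" using A5[OF CA[OF \<open>X \<in> C\<close>] _ \<open>p' \<in> L\<close> \<open>p' \<le> p\<close>] by blast
      then show "\<exists>H'. (p',H') \<in> \<Union>C" using \<open>X \<in> C\<close> by blast
    qed
    show "\<Union>C \<in> A" using AI[OF a1 a2 a3 a4 a5] .
  qed
  obtain M where M: "M \<in> A" and Mmax: "\<forall>X\<in>A. M \<subseteq> X \<longrightarrow> X = M"
    using zorn_helper[OF G0 chains] by blast
  have M1: "M \<subseteq> L \<times> UNIV" using A1[OF M] .
  have M2: "(q,H0) \<in> M" using A2[OF M] .
  have M3: "\<And>p H. (p,H) \<in> M \<Longrightarrow> good p H" using A3[OF M] .
  have M4: "\<And>p H p' H'. (p,H) \<in> M \<Longrightarrow> (p',H') \<in> M \<Longrightarrow> p \<le> p' \<Longrightarrow> f p p' ` H \<subseteq> H'" using A4[OF M] .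
  have M5: "\<And>p H p'. (p,H) \<in> M \<Longrightarrow> p' \<in> L \<Longrightarrow> p' \<le> p \<Longrightarrow> \<exists>H'. (p',H') \<in> M" using A5[OF M] .
  have MinL: "\<And>p H. (p,H) \<in> M \<Longrightarrow> p \<in> L" using M1 by blast
  have full: "\<forall>p\<in>L. \<exists>H. (p,H) \<in> M"
  proof (rule ccontr)
    assume "\<not> (\<forall>p\<in>L. \<exists>H. (p,H) \<in> M)"
    then obtain p where p: "p \<in> L" "\<And>H. (p,H) \<notin> M" by blast
    have pq: "p \<noteq> q" using p(2) M2 by blast
    have pQ: "p \<in> Q" using LQ[OF p(1)] .
    have qp: "q \<le> p" using L(3) p(1) by blast
    define \<SS> where "\<SS> = {f d p ` H | d H. (d,H) \<in> M \<and> d \<le> p}"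
    define S where "S = \<Union>\<SS>"
    have Ssub: "subspace S"
      unfolding S_def
    proof (rule union_chain_subspace)
      show "\<SS> \<noteq> {}" unfolding \<SS>_def using M2 qp by blast
    next
      fix X assume "X \<in> \<SS>"
      then obtain d H where X: "X = f d p ` H" "(d,H) \<in> M" "d \<le> p" unfolding \<SS>_def by blast
      have "good d H" using M3[OF X(2)] .
      then show "subspace X" using X img_sub[OF LQ[OF MinL[OF X(2)]] pQ X(3)] unfolding good_def by blast
    next
      fix X Y assume "X \<in> \<SS>" "Y \<in> \<SS>"
      then obtain d H d' H' where X: "X = f d p ` H" "(d,H) \<in> M" "d \<le> p" "Y = f d' p ` H'" "(d',H') \<in> M" "d' \<le> p"
        unfolding \<SS>_def by blast
      have mono: "\<And>d H d' H'. (d,H) \<in> M \<Longrightarrow> (d',H') \<in> M \<Longrightarrow> d \<le> d' \<Longrightarrow> d' \<le> p \<Longrightarrow> f d p ` H \<subseteq> f d' p ` H'"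
      proof
        fix d H d' H' y assume a: "(d,H) \<in> M" "(d',H') \<in> M" "d \<le> d'" "d' \<le> p" "y \<in> f d p ` H"
        then obtain h where h: "h \<in> H" "y = f d p h" by blast
        have hV: "h \<in> V d" using M3[OF a(1)] h(1) unfolding good_def by blast
        have "y = f d' p (f d d' h)" using fcomp[OF LQ[OF MinL[OF a(1)]] LQ[OF MinL[OF a(2)]] pQ a(3,4) hV] h(2) by simp
        moreover have "f d d' h \<in> H'" using M4[OF a(1,2,3)] h(1) by blast
        ultimately show "y \<in> f d' p ` H'" by blast
      qed
      have "d \<le> d' \<or> d' \<le> d" using chd[OF p(1) pq MinL[OF X(2)] MinL[OF X(5)] X(3) X(6)] .
      then show "X \<subseteq> Y \<or> Y \<subseteq> X" using mono X by blast
    qed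
    define \<KK> where "\<KK> = {{z\<in>V p. f p r z = 0} | r. r \<in> L \<and> p \<le> r}"
    define K where "K = \<Union>\<KK>"
    have Ksub: "subspace K"
      unfolding K_def
    proof (rule union_chain_subspace)
      show "\<KK> \<noteq> {}" unfolding \<KK>_def using p(1) by blast
    next
      fix X assume "X \<in> \<KK>"
      then obtain r where X: "X = {z\<in>V p. f p r z = 0}" "r \<in> L" "p \<le> r" unfolding \<KK>_def by blast
      then show "subspace X" using preim_sub[OF pQ LQ[OF X(2)] X(3) subspace_single_0] by simp
    next
      fix X Y assume "X \<in> \<KK>" "Y \<in> \<KK>"
      then obtain r r' where X: "X = {z\<in>V p. f p r z = 0}" "r \<in> L" "p \<le> r" "Y = {z\<in>V p. f p r' z = 0}" "r' \<in> L" "p \<le> r'"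
        unfolding \<KK>_def by blast
      have mono: "\<And>r r'. r \<in> L \<Longrightarrow> r' \<in> L \<Longrightarrow> p \<le> r \<Longrightarrow> r \<le> r' \<Longrightarrow> {z\<in>V p. f p r z = 0} \<subseteq> {z\<in>V p. f p r' z = 0}"
      proof
        fix r r' z assume a: "r \<in> L" "r' \<in> L" "p \<le> r" "r \<le> r'" "z \<in> {z\<in>V p. f p r z = 0}"
        have zV: "z \<in> V p" using a(5) by blast
        then have "f p r' z = f r r' (f p r z)" using fcomp[OF pQ LQ[OF a(1)] LQ[OF a(2)] a(3,4) zV] by simp
        then show "z \<in> {z\<in>V p. f p r' z = 0}" using a(5) f0[OF LQ[OF a(1)] LQ[OF a(2)] a(4)] by simp
      qed
      have "r \<le> r' \<or> r' \<le> r" using chu[OF p(1) pq X(2) X(5) X(3) X(6)] .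
      then show "X \<subseteq> Y \<or> Y \<subseteq> X" using mono X by blast
    qed
    define R where "R = {a + b | a b. a \<in> S \<and> b \<in> K}"
    have Rsub: "subspace R" unfolding R_def using subspace_sums[OF Ssub Ksub] .
    have SV: "S \<subseteq> V p"
    proof
      fix y assume "y \<in> S"
      then obtain d H h where a: "(d,H) \<in> M" "d \<le> p" "h \<in> H" "y = f d p h" unfolding S_def \<SS>_def by blast
      have "h \<in> V d" using M3[OF a(1)] a(3) unfolding good_def by blast
      then show "y \<in> V p" using fV[OF LQ[OF MinL[OF a(1)]] pQ a(2)] a(4) by blast
    qed
    have KV: "K \<subseteq> V p" unfolding K_def \<KK>_def by blast
    have RV: "R \<subseteq> V p" unfolding R_def using SV KV subspace_add[OF Vsub[OF pQ]] by blast
    have S0: "0 \<in> S" using subspace_0[OF Ssub] .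
    have K0': "0 \<in> K" using subspace_0[OF Ksub] .
    have wR: "w p \<notin> R"
    proof
      assume "w p \<in> R"
      then obtain a b where ab: "w p = a + b" "a \<in> S" "b \<in> K" unfolding R_def by blast
      then obtain d H h where a: "(d,H) \<in> M" "d \<le> p" "h \<in> H" "a = f d p h" unfolding S_def \<SS>_def by blast
      obtain r where b: "r \<in> L" "p \<le> r" "b \<in> V p" "f p r b = 0" using ab(3) unfolding K_def \<KK>_def by blast
      have gd: "good d H" using M3[OF a(1)] .
      have dL: "d \<in> L" using MinL[OF a(1)] .
      have hV: "h \<in> V d" using gd a(3) unfolding good_def by blast
      have dr: "d \<le> r" using a(2) b(2) order_trans by blast
      have wdV: "w d \<in> V d" using wV[OF dL] .
      have diffV: "w d - h \<in> V d" using subspace_diff[OF Vsub[OF LQ[OF dL]] wdV hV] .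
      have "f d p (w d - h) = w p - a" using fdiff[OF LQ[OF dL] pQ a(2) wdV hV] wtr[OF dL p(1) a(2)] a(4) by simp
      also have "\<dots> = b" using ab(1) by simp
      finally have e1: "f d p (w d - h) = b" .
      have "f d r (w d - h) = f p r (f d p (w d - h))" using fcomp[OF LQ[OF dL] pQ LQ[OF b(1)] a(2) b(2) diffV] by simp
      then have "f d r (w d - h) = 0" using e1 b(4) by simp
      then have "w d - h \<in> H" using gd b(1) dr diffV unfolding good_def by blast
      then have "(w d - h) + h \<in> H" using gd a(3) subspace_add unfolding good_def by blast
      then have "w d \<in> H" by simp
      then show False using gd unfolding good_def by blast
    qed
    obtain Hp where Hp: "subspace Hp" "R \<subseteq> Hp" "Hp \<subseteq> V p" "w p \<notin> Hp" "\<forall>z\<in>V p. \<exists>h\<in>Hp. \<exists>c. z = h + sc c (w p)"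
      using hyperplane_exists[OF Rsub RV Vsub[OF pQ] wV[OF p(1)] wR] by blast
    have SH: "S \<subseteq> Hp" using Hp(2) K0' unfolding R_def by force
    have KH: "K \<subseteq> Hp" using Hp(2) S0 unfolding R_def by force
    define P where "P r = {z\<in>V r. f r p z \<in> Hp}" for r
    define M' where "M' = M \<union> {(r, P r) | r. r \<in> L \<and> r \<le> p \<and> (\<forall>H. (r,H) \<notin> M)}"
    have newD: "\<And>r H. (r,H) \<in> M' \<Longrightarrow> (r,H) \<notin> M \<Longrightarrow> r \<in> L \<and> r \<le> p \<and> H = P r \<and> (\<forall>H. (r,H) \<notin> M)"
      unfolding M'_def by blast
    have goodP: "\<And>r. r \<in> L \<Longrightarrow> r \<le> p \<Longrightarrow> (\<forall>H. (r,H) \<notin> M) \<Longrightarrow> good r (P r)"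
    proof -
      fix r assume r: "r \<in> L" "r \<le> p" "\<forall>H. (r,H) \<notin> M"
      have rQ: "r \<in> Q" using LQ[OF r(1)] .
      have rq: "r \<noteq> q" using r(3) M2 by blast
      have s1: "subspace (P r)" unfolding P_def using preim_sub[OF rQ pQ r(2) Hp(1)] .
      have s2: "P r \<subseteq> V r" unfolding P_def by blast
      have s3: "w r \<notin> P r" unfolding P_def using wtr[OF r(1) p(1) r(2)] Hp(4) by simp
      have s4: "\<forall>z\<in>V r. \<exists>h\<in>P r. \<exists>c. z = h + sc c (w r)"
      proof
        fix z assume z: "z \<in> V r"
        obtain h c where hc: "h \<in> Hp" "f r p z = h + sc c (w p)" using Hp(5) fV[OF rQ pQ r(2) z] by blast
        have wrV: "w r \<in> V r" using wV[OF r(1)] .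
        have scV: "sc c (w r) \<in> V r" using subspace_scale[OF Vsub[OF rQ] wrV] .
        have "f r p (z - sc c (w r)) = f r p z - sc c (w p)"
          using fdiff[OF rQ pQ r(2) z scV] fsc[OF rQ pQ r(2) wrV] wtr[OF r(1) p(1) r(2)] by simp
        then have "f r p (z - sc c (w r)) = h" using hc(2) by simp
        then have "z - sc c (w r) \<in> P r" unfolding P_def using hc(1) subspace_diff[OF Vsub[OF rQ] z scV] by simp
        moreover have "z = (z - sc c (w r)) + sc c (w r)" by simp
        ultimately show "\<exists>h\<in>P r. \<exists>c. z = h + sc c (w r)" by blast
      qed
      have s5: "\<forall>r'\<in>L. r \<le> r' \<longrightarrow> (\<forall>z\<in>V r. f r r' z = 0 \<longrightarrow> z \<in> P r)"
      proof (intro ballI impI)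
        fix r' z assume a: "r' \<in> L" "r \<le> r'" "z \<in> V r" "f r r' z = 0"
        have r'Q: "r' \<in> Q" using LQ[OF a(1)] .
        have "r' \<le> p \<or> p \<le> r'" using chu[OF r(1) rq a(1) p(1) a(2) r(2)] .
        then have "f r p z \<in> Hp"
        proof
          assume r'p: "r' \<le> p"
          have "f r p z = f r' p (f r r' z)" using fcomp[OF rQ r'Q pQ a(2) r'p a(3)] by simp
          then have "f r p z = 0" using a(4) f0[OF r'Q pQ r'p] by simp
          then show ?thesis using subspace_0[OF Hp(1)] by simp
        next
          assume pr': "p \<le> r'"
          have "f p r' (f r p z) = f r r' z" using fcomp[OF rQ pQ r'Q r(2) pr' a(3)] .
          then have "f r p z \<in> {z\<in>V p. f p r' z = 0}" using a(4) fV[OF rQ pQ r(2) a(3)] by simp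
          then have "f r p z \<in> K" unfolding K_def \<KK>_def using a(1) pr' by blast
          then show ?thesis using KH by blast
        qed
        then show "z \<in> P r" unfolding P_def using a(3) by simp
      qed
      show "good r (P r)" unfolding good_def using s1 s2 s3 s4 s5 by blast
    qed
    have M'A: "M' \<in> A"
    proof (intro AI allI impI)
      show "M' \<subseteq> L \<times> UNIV" using M1 unfolding M'_def by blast
      show "(q,H0) \<in> M'" using M2 unfolding M'_def by blast
    next
      fix r H assume rH: "(r,H) \<in> M'"
      show "good r H"
      proof (cases "(r,H) \<in> M")
        case True then show ?thesis using M3 by blast
      next
        case False
        then show ?thesis using newD[OF rH False] goodP by blast
      qed
    next
      fix r H r' H' assume rH: "(r,H) \<in> M'" "(r',H') \<in> M'" "r \<le> r'"
      show "f r r' ` H \<subseteq> H'"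
      proof (cases "(r',H') \<in> M")
        case r'M: True
        show ?thesis
        proof (cases "(r,H) \<in> M")
          case True then show ?thesis using M4 r'M rH(3) by blast
        next
          case False
          then have "\<forall>H. (r,H) \<notin> M" "r \<in> L" using newD rH(1) by blast+
          then show ?thesis using M5[OF r'M _ rH(3)] by blast
        qed
      next
        case r'M: False
        then have r': "r' \<in> L" "r' \<le> p" "H' = P r'" using newD rH(2) by blast+
        show ?thesis
        proof
          fix y assume "y \<in> f r r' ` H"
          then obtain h where h: "h \<in> H" "y = f r r' h" by blast
          have rL: "r \<in> L" using rH(1) unfolding M'_def using M1 by blast
          have rp: "r \<le> p" using rH(3) r'(2) order_trans by blast
          have hV: "h \<in> V r"
          proof (cases "(r,H) \<in> M")
            case True then show ?thesis using M3 h(1) unfolding good_def by blast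
          next
            case False then show ?thesis using newD[OF rH(1) False] h(1) unfolding P_def by blast
          qed
          have yV: "y \<in> V r'" using fV[OF LQ[OF rL] LQ[OF r'(1)] rH(3) hV] h(2) by simp
          have fy: "f r' p y = f r p h" using fcomp[OF LQ[OF rL] LQ[OF r'(1)] pQ rH(3) r'(2) hV] h(2) by simp
          have "f r p h \<in> Hp"
          proof (cases "(r,H) \<in> M")
            case True
            then have "f r p h \<in> S" unfolding S_def \<SS>_def using h(1) rp by blast
            then show ?thesis using SH by blast
          next
            case False then show ?thesis using newD[OF rH(1) False] h(1) unfolding P_def by blast
          qed
          then show "y \<in> H'" using r'(3) yV fy unfolding P_def by simp
        qed
      qed
    next
      fix r H r' assume rH: "(r,H) \<in> M'" "r' \<in> L" "r' \<le> r"
      show "\<exists>H'. (r',H') \<in> M'"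
      proof (cases "\<exists>H'. (r',H') \<in> M")
        case True then show ?thesis unfolding M'_def by blast
      next
        case False
        have "r' \<le> p"
        proof (cases "(r,H) \<in> M")
          case True then show ?thesis using M5[OF True rH(2,3)] False by blast
        next
          case False then show ?thesis using newD rH(1) rH(3) order_trans by blast
        qed
        then show ?thesis using False rH(2) unfolding M'_def by blast
      qed
    qed
    have "M \<subseteq> M'" unfolding M'_def by blast
    then have "M' = M" using Mmax M'A by blast
    moreover have "(p, P p) \<in> M'" using p unfolding M'_def by blast
    ultimately show False using p(2) by blast
  qed
  define Hs where "Hs p = (SOME H. (p,H) \<in> M)" for p
  have HsM: "\<And>p. p \<in> L \<Longrightarrow> (p, Hs p) \<in> M" unfolding Hs_def using full someI_ex by metis
  have Hsq: "Hs q = H0"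
  proof -
    have a: "(q, Hs q) \<in> M" using HsM L(2) by blast
    have i1: "f q q ` Hs q \<subseteq> H0" "f q q ` H0 \<subseteq> Hs q" using M4[OF a M2] M4[OF M2 a] by auto
    have i2: "Hs q \<subseteq> V q" using M3[OF a] unfolding good_def by blast
    show ?thesis
    proof
      show "Hs q \<subseteq> H0"
      proof
        fix z assume z: "z \<in> Hs q"
        then have "f q q z \<in> H0" using i1(1) by blast
        then show "z \<in> H0" using fid[OF q] i2 z by force
      qed
      show "H0 \<subseteq> Hs q"
      proof
        fix z assume z: "z \<in> H0"
        then have "f q q z \<in> Hs q" using i1(2) by blast
        then show "z \<in> Hs q" using fid[OF q] H0(2) z by force
      qed
    qed
  qed
  have P2: "\<forall>p\<in>L. subspace (Hs p) \<and> Hs p \<subseteq> V p \<and> f q p v \<notin> Hs p \<and> (\<forall>z\<in>V p. \<exists>h\<in>Hs p. \<exists>c. z = h + sc c (f q p v))"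
  proof
    fix p assume p: "p \<in> L"
    have g: "good p (Hs p)" using M3[OF HsM[OF p]] .
    then show "subspace (Hs p) \<and> Hs p \<subseteq> V p \<and> f q p v \<notin> Hs p \<and> (\<forall>z\<in>V p. \<exists>h\<in>Hs p. \<exists>c. z = h + sc c (f q p v))"
      unfolding good_def w_def by blast
  qed
  have P3: "\<forall>p\<in>L. \<forall>p'\<in>L. p \<le> p' \<longrightarrow> f p p' ` Hs p \<subseteq> Hs p'"
    using M4 HsM by blast
  show ?thesis using Hsq P2 P3 by blast
qed

end


context pm
begin

lemma Im_mono:
  assumes "p \<in> Q" "p' \<in> Q" "r \<in> Q" "p \<le> p'" "p' \<le> r"
  shows "f p r ` V p \<subseteq> f p' r ` V p'"
proof
  fix z assume "z \<in> f p r ` V p"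
  then obtain w where w: "w \<in> V p" "z = f p r w" by blast
  then have "z = f p' r (f p p' w)" using fcomp[OF assms(1-5) w(1)] by simp
  moreover have "f p p' w \<in> V p'" using fV[OF assms(1,2,4) w(1)] .
  ultimately show "z \<in> f p' r ` V p'" by blast
qed

lemma Ker_mono:
  assumes "r \<in> Q" "p \<in> Q" "p' \<in> Q" "r \<le> p" "p \<le> p'"
  shows "{z\<in>V r. f r p z = 0} \<subseteq> {z\<in>V r. f r p' z = 0}"
proof
  fix z assume z: "z \<in> {z\<in>V r. f r p z = 0}"
  then have zV: "z \<in> V r" by blast
  have "f r p' z = f p p' (f r p z)" using fcomp[OF assms(1-5) zV] by simp
  then show "z \<in> {z\<in>V r. f r p' z = 0}" using z f0[OF assms(2,3,5)] by simp
qed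

lemma Im_sub: "p \<in> Q \<Longrightarrow> r \<in> Q \<Longrightarrow> p \<le> r \<Longrightarrow> subspace (f p r ` V p) \<and> f p r ` V p \<subseteq> V r"
  using img_sub[of p r "V p"] Vsub fV by blast

lemma Ker_sub: "r \<in> Q \<Longrightarrow> p \<in> Q \<Longrightarrow> r \<le> p \<Longrightarrow> subspace {z\<in>V r. f r p z = 0} \<and> {z\<in>V r. f r p z = 0} \<subseteq> V r"
  using preim_sub[of r p "{0}"] by simp

lemma nonzero_elem: "subspace S \<Longrightarrow> S \<noteq> {0} \<Longrightarrow> \<exists>v\<in>S. v \<noteq> 0"
  using subspace_0 by blast

lemma fam_min:
  assumes r: "r \<in> Q" and ex: "P p1"
    and sub: "\<And>p. P p \<Longrightarrow> subspace (g p) \<and> g p \<subseteq> V r"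
    and ch: "\<And>p p'. P p \<Longrightarrow> P p' \<Longrightarrow> g p \<subseteq> g p' \<or> g p' \<subseteq> g p"
  shows "\<exists>p0. P p0 \<and> (\<forall>p. P p \<longrightarrow> g p0 \<subseteq> g p)"
proof -
  obtain B where B: "finite B" "V r = span B" using finV[OF r] by blast
  have "\<exists>S\<in>{g p | p. P p}. \<forall>T\<in>{g p | p. P p}. S \<subseteq> T"
    by (rule chain_subspace_min[OF B(1)]) (use ex sub B(2) ch in blast)+
  then show ?thesis by blast
qed

lemma fam_max:
  assumes r: "r \<in> Q" and ex: "P p1"
    and sub: "\<And>p. P p \<Longrightarrow> subspace (g p) \<and> g p \<subseteq> V r"
    and ch: "\<And>p p'. P p \<Longrightarrow> P p' \<Longrightarrow> g p \<subseteq> g p' \<or> g p' \<subseteq> g p"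
  shows "\<exists>p0. P p0 \<and> (\<forall>p. P p \<longrightarrow> g p \<subseteq> g p0)"
proof -
  obtain B where B: "finite B" "V r = span B" using finV[OF r] by blast
  have "\<exists>S\<in>{g p | p. P p}. \<forall>T\<in>{g p | p. P p}. T \<subseteq> S"
    by (rule chain_subspace_max[OF B(1)]) (use ex sub B(2) ch in blast)+
  then show ?thesis by blast
qed

lemma hyper_swap:
  assumes "subspace H" "H \<subseteq> W" "\<forall>z\<in>W. \<exists>h\<in>H. \<exists>c. z = h + sc c w" "v \<in> W" "v \<notin> H"
  shows "\<forall>z\<in>W. \<exists>h\<in>H. \<exists>c. z = h + sc c v"
proof
  fix z assume z: "z \<in> W"
  obtain h c where hc: "h \<in> H" "v = h + sc c w" using assms(3,4) by blast
  have c0: "c \<noteq> 0" using hc assms(5) by auto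
  obtain h' d where hd: "h' \<in> H" "z = h' + sc d w" using assms(3) z by blast
  have "sc c w = v - h" using hc(2) by simp
  then have "w = sc (inverse c) (v - h)" using c0 by (metis scale_one scale_scale left_inverse)
  then have "z = h' + sc (d * inverse c) (v - h)" using hd(2) by simp
  also have "\<dots> = (h' - sc (d * inverse c) h) + sc (d * inverse c) v"
    by (simp add: scale_right_diff_distrib)
  finally have "z = (h' - sc (d * inverse c) h) + sc (d * inverse c) v" .
  moreover have "h' - sc (d * inverse c) h \<in> H"
    using subspace_diff[OF assms(1) hd(1) subspace_scale[OF assms(1) hc(1)]] .
  ultimately show "\<exists>h\<in>H. \<exists>c. z = h + sc c v" by blast
qed

end


context pm
begin

lemma case_down:
  assumes indec: "indecomposable sc Q V f"
  and QAB: "QA \<subseteq> Q" "QB \<subseteq> Q" "Q = QA \<union> QB" "m \<in> QA" "m \<in> QB"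
  and chA: "\<And>a b. a \<in> QA \<Longrightarrow> b \<in> QA \<Longrightarrow> a \<le> b \<or> b \<le> a"
  and chB: "\<And>a b. a \<in> QB \<Longrightarrow> b \<in> QB \<Longrightarrow> a \<le> b \<or> b \<le> a"
  and S3: "\<And>a b. a \<in> QA \<Longrightarrow> b \<in> QB \<Longrightarrow> a \<le> b \<or> b \<le> a \<Longrightarrow> a = m \<or> b = m"
  and down: "\<forall>p\<in>Q. p \<le> m" and Vm: "V m \<noteq> {0}"
  shows "\<exists>I. is_interval Q I \<and> pmod_iso sc Q V f ((*) :: 'k \<Rightarrow> 'k \<Rightarrow> 'k) (kI_space I) (kI_map I)"
proof -
  have mQ: "m \<in> Q" using QAB(1,4) by blast
  have QA_Q: "\<And>p. p \<in> QA \<Longrightarrow> p \<in> Q" using QAB(1) by blast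
  have QB_Q: "\<And>p. p \<in> QB \<Longrightarrow> p \<in> Q" using QAB(2) by blast
  have Qcases: "\<And>p. p \<in> Q \<Longrightarrow> p \<notin> QA \<Longrightarrow> p \<in> QB" using QAB(3) by blast
  define Im where "Im p = f p m ` V p" for p
  have Imsub: "\<And>p. p \<in> Q \<Longrightarrow> subspace (Im p) \<and> Im p \<subseteq> V m" unfolding Im_def using Im_sub mQ down by blast
  have Immono: "\<And>p p'. p \<in> Q \<Longrightarrow> p' \<in> Q \<Longrightarrow> p \<le> p' \<Longrightarrow> Im p \<subseteq> Im p'"
    unfolding Im_def using Im_mono mQ down by blast
  have Imm: "Im m = V m" unfolding Im_def using fpp_img[OF mQ] .
  obtain pA where pA: "pA \<in> QA \<and> Im pA \<noteq> {0}" "\<forall>p. p \<in> QA \<and> Im p \<noteq> {0} \<longrightarrow> Im pA \<subseteq> Im p"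
  proof -
    have "\<exists>p0. (p0 \<in> QA \<and> Im p0 \<noteq> {0}) \<and> (\<forall>p. p \<in> QA \<and> Im p \<noteq> {0} \<longrightarrow> Im p0 \<subseteq> Im p)"
    proof (rule fam_min[OF mQ, of "\<lambda>p. p \<in> QA \<and> Im p \<noteq> {0}" m Im])
      show "m \<in> QA \<and> Im m \<noteq> {0}" using QAB(4) Imm Vm by simp
    next
      fix p assume "p \<in> QA \<and> Im p \<noteq> {0}" then show "subspace (Im p) \<and> Im p \<subseteq> V m" using Imsub QA_Q by blast
    next
      fix p p' assume "p \<in> QA \<and> Im p \<noteq> {0}" "p' \<in> QA \<and> Im p' \<noteq> {0}"
      then have "p \<le> p' \<or> p' \<le> p" "p \<in> Q" "p' \<in> Q" using chA QA_Q by blast+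
      then show "Im p \<subseteq> Im p' \<or> Im p' \<subseteq> Im p" using Immono by blast
    qed
    then show ?thesis using that by blast
  qed
  obtain v where v: "v \<in> Im pA" "v \<noteq> 0" using nonzero_elem[of "Im pA"] Imsub pA QA_Q by blast
  have vV: "v \<in> V m" using v Imsub pA QA_Q by blast
  obtain G where G: "subspace G" "G \<subseteq> V m" "v \<notin> G" "\<forall>p\<in>QB. v \<notin> Im p \<longrightarrow> Im p \<subseteq> G"
  proof (cases "\<exists>p\<in>QB. v \<notin> Im p")
    case True
    then obtain p1 where p1: "p1 \<in> QB" "v \<notin> Im p1" by blast
    have "\<exists>p0. (p0 \<in> QB \<and> v \<notin> Im p0) \<and> (\<forall>p. p \<in> QB \<and> v \<notin> Im p \<longrightarrow> Im p \<subseteq> Im p0)"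
    proof (rule fam_max[OF mQ, of "\<lambda>p. p \<in> QB \<and> v \<notin> Im p" p1 Im])
      show "p1 \<in> QB \<and> v \<notin> Im p1" using p1 by blast
    next
      fix p assume "p \<in> QB \<and> v \<notin> Im p" then show "subspace (Im p) \<and> Im p \<subseteq> V m" using Imsub QB_Q by blast
    next
      fix p p' assume "p \<in> QB \<and> v \<notin> Im p" "p' \<in> QB \<and> v \<notin> Im p'"
      then have "p \<le> p' \<or> p' \<le> p" "p \<in> Q" "p' \<in> Q" using chB QB_Q by blast+
      then show "Im p \<subseteq> Im p' \<or> Im p' \<subseteq> Im p" using Immono by blast
    qed
    then obtain p0 where "p0 \<in> QB" "v \<notin> Im p0" "\<forall>p. p \<in> QB \<and> v \<notin> Im p \<longrightarrow> Im p \<subseteq> Im p0" by blast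
    then show ?thesis using that[of "Im p0"] Imsub QB_Q by blast
  next
    case False
    then show ?thesis using that[of "{0}"] v(2) V0[OF mQ] by auto
  qed
  obtain H0 where H0: "subspace H0" "G \<subseteq> H0" "H0 \<subseteq> V m" "v \<notin> H0" "\<forall>z\<in>V m. \<exists>h\<in>H0. \<exists>c. z = h + sc c v"
    using hyperplane_exists[OF G(1) G(2) Vsub[OF mQ] vV G(3)] by blast
  define Ld where "Ld = {p\<in>Q. v \<in> Im p}"
  have mLd: "m \<in> Ld" unfolding Ld_def using mQ Imm vV by simp
  have Ldc: "\<forall>p\<in>Q. p \<le> m \<longrightarrow> p \<notin> Ld \<longrightarrow> f p m ` V p \<subseteq> H0"
  proof (intro ballI impI)
    fix p assume p: "p \<in> Q" "p \<le> m" "p \<notin> Ld"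
    then have vp: "v \<notin> Im p" unfolding Ld_def by simp
    have "Im p \<subseteq> H0"
    proof (cases "p \<in> QA")
      case True
      then have "Im p = {0}" using pA(2) vp v(1) by blast
      then show ?thesis using subspace_0[OF H0(1)] by simp
    next
      case False
      then have "p \<in> QB" using p Qcases by blast
      then show ?thesis using G(4) vp H0(2) by blast
    qed
    then show "f p m ` V p \<subseteq> H0" unfolding Im_def .
  qed
  have liftC: "\<And>C. C \<subseteq> Q \<Longrightarrow> m \<in> C \<Longrightarrow> (\<And>a b. a \<in> C \<Longrightarrow> b \<in> C \<Longrightarrow> a \<le> b \<or> b \<le> a) \<Longrightarrow>
      \<exists>x. (\<forall>p\<in>Ld \<inter> C. x p \<in> V p \<and> f p m (x p) = v) \<and> (\<forall>p\<in>Ld \<inter> C. \<forall>p'\<in>Ld \<inter> C. p \<le> p' \<longrightarrow> f p p' (x p) = x p')"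
  proof -
    fix C assume C: "C \<subseteq> Q" "m \<in> C" and ch: "\<And>a b. a \<in> C \<Longrightarrow> b \<in> C \<Longrightarrow> a \<le> b \<or> b \<le> a"
    show "\<exists>x. (\<forall>p\<in>Ld \<inter> C. x p \<in> V p \<and> f p m (x p) = v) \<and> (\<forall>p\<in>Ld \<inter> C. \<forall>p'\<in>Ld \<inter> C. p \<le> p' \<longrightarrow> f p p' (x p) = x p')"
    proof (rule lift[OF mQ vV v(2)])
      show "Ld \<inter> C \<subseteq> Q" "m \<in> Ld \<inter> C" using C mLd unfolding Ld_def by auto
      show "\<forall>p\<in>Ld \<inter> C. p \<le> m" using down unfolding Ld_def by blast
      show "\<forall>p\<in>Ld \<inter> C. v \<in> f p m ` V p" unfolding Ld_def Im_def by blast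
    next
      fix p a b assume "a \<in> Ld \<inter> C" "b \<in> Ld \<inter> C"
      then show "a \<le> b \<or> b \<le> a" using ch by blast
    next
      fix p a b assume "a \<in> Ld \<inter> C" "b \<in> Ld \<inter> C"
      then show "a \<le> b \<or> b \<le> a" using ch by blast
    qed
  qed
  have exA: "\<exists>x. (\<forall>p\<in>Ld \<inter> QA. x p \<in> V p \<and> f p m (x p) = v) \<and> (\<forall>p\<in>Ld \<inter> QA. \<forall>p'\<in>Ld \<inter> QA. p \<le> p' \<longrightarrow> f p p' (x p) = x p')"
    by (rule liftC[OF QAB(1,4)], rule chA)
  then obtain xA where xA: "\<forall>p\<in>Ld \<inter> QA. xA p \<in> V p \<and> f p m (xA p) = v" "\<forall>p\<in>Ld \<inter> QA. \<forall>p'\<in>Ld \<inter> QA. p \<le> p' \<longrightarrow> f p p' (xA p) = xA p'"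
    by (elim exE conjE)
  have exB: "\<exists>x. (\<forall>p\<in>Ld \<inter> QB. x p \<in> V p \<and> f p m (x p) = v) \<and> (\<forall>p\<in>Ld \<inter> QB. \<forall>p'\<in>Ld \<inter> QB. p \<le> p' \<longrightarrow> f p p' (x p) = x p')"
    by (rule liftC[OF QAB(2,5)], rule chB)
  then obtain xB where xB: "\<forall>p\<in>Ld \<inter> QB. xB p \<in> V p \<and> f p m (xB p) = v" "\<forall>p\<in>Ld \<inter> QB. \<forall>p'\<in>Ld \<inter> QB. p \<le> p' \<longrightarrow> f p p' (xB p) = xB p'"
    by (elim exE conjE)
  have xAm0: "xA m \<in> V m \<and> f m m (xA m) = v" using xA(1) mLd QAB(4) by blast
  have xAm: "xA m = v" using xAm0 fid[OF mQ, of "xA m"] by simp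
  define x where "x p = (if p \<in> QA then xA p else xB p)" for p
  have LdQ: "Ld \<subseteq> Q" unfolding Ld_def by blast
  have x1: "\<forall>p\<in>Ld. x p \<in> V p \<and> f p m (x p) = v"
  proof
    fix p assume p: "p \<in> Ld"
    show "x p \<in> V p \<and> f p m (x p) = v"
    proof (cases "p \<in> QA")
      case True then show ?thesis using xA(1) p unfolding x_def by simp
    next
      case False
      then have "p \<in> QB" using p LdQ Qcases by blast
      then show ?thesis using xB(1) p False unfolding x_def by simp
    qed
  qed
  have x2: "\<forall>p\<in>Ld. \<forall>p'\<in>Ld. p \<le> p' \<longrightarrow> f p p' (x p) = x p'"
  proof (intro ballI impI)
    fix p p' assume pp: "p \<in> Ld" "p' \<in> Ld" "p \<le> p'"
    have pQ: "p \<in> Q" "p' \<in> Q" using pp LdQ by blast+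
    show "f p p' (x p) = x p'"
    proof (cases "p \<in> QA")
      case pA': True
      show ?thesis
      proof (cases "p' \<in> QA")
        case True then show ?thesis using xA(2) pp pA' unfolding x_def by simp
      next
        case False
        then have "p' \<in> QB" using pQ Qcases by blast
        then have "p = m" using S3[OF pA'] pp(3) False QAB(4) by blast
        then have "p' = m" using pp(3) down pQ(2) antisym by blast
        then show ?thesis using False QAB(4) by simp
      qed
    next
      case pA': False
      then have pB: "p \<in> QB" using pQ Qcases by blast
      show ?thesis
      proof (cases "p' \<in> QA")
        case True
        then have "p' = m" using S3[OF True pB] pp(3) pA' QAB(4) by blast
        then show ?thesis using xB(1) pp(1) pB pA' xAm QAB(4) unfolding x_def by simp
      next
        case False
        then have "p' \<in> QB" using pQ Qcases by blast
        then show ?thesis using xB(2) pp pB pA' False unfolding x_def by simp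
      qed
    qed
  qed
  have fmm: "f m m v = v" using fid[OF mQ vV] .
  show ?thesis
  proof (rule gdl[OF indec mQ vV v(2) H0(1) H0(3) H0(4) H0(5), of Ld x "{m}" "\<lambda>_. H0"])
    show "Ld \<subseteq> Q" "\<forall>p\<in>Ld. p \<le> m" "m \<in> Ld" using LdQ down mLd by blast+
    show "\<forall>p\<in>Ld. x p \<in> V p \<and> f p m (x p) = v" using x1 .
    show "\<forall>p\<in>Ld. \<forall>p'\<in>Ld. p \<le> p' \<longrightarrow> f p p' (x p) = x p'" using x2 .
    show "\<forall>p\<in>Q. p \<le> m \<longrightarrow> p \<notin> Ld \<longrightarrow> f p m ` V p \<subseteq> H0" using Ldc .
    show "{m} \<subseteq> Q" "\<forall>p\<in>{m}. m \<le> p" "m \<in> {m}" using mQ by auto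
    show "H0 = H0" by simp
    show "\<forall>p\<in>{m}. subspace H0 \<and> H0 \<subseteq> V p \<and> f m p v \<notin> H0 \<and> (\<forall>z\<in>V p. \<exists>h\<in>H0. \<exists>c. z = h + sc c (f m p v))"
      using H0 fmm by simp
    show "\<forall>p\<in>{m}. \<forall>p'\<in>{m}. p \<le> p' \<longrightarrow> f p p' ` H0 \<subseteq> H0" using fid[OF mQ] H0(3) by auto
    show "\<forall>p\<in>Q. m \<le> p \<longrightarrow> p \<notin> {m} \<longrightarrow> f m p v = 0" using down antisym by blast
    show "\<forall>p\<in>Q. p \<le> m \<or> m \<le> p \<or> V p = {0}" using down by blast
  qed
qed

end


context pm
begin

lemma case_up:
  assumes indec: "indecomposable sc Q V f"
  and QAB: "QA \<subseteq> Q" "QB \<subseteq> Q" "Q = QA \<union> QB" "m \<in> QA" "m \<in> QB"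
  and chA: "\<And>a b. a \<in> QA \<Longrightarrow> b \<in> QA \<Longrightarrow> a \<le> b \<or> b \<le> a"
  and chB: "\<And>a b. a \<in> QB \<Longrightarrow> b \<in> QB \<Longrightarrow> a \<le> b \<or> b \<le> a"
  and S3: "\<And>a b. a \<in> QA \<Longrightarrow> b \<in> QB \<Longrightarrow> a \<le> b \<or> b \<le> a \<Longrightarrow> a = m \<or> b = m"
  and up: "\<forall>p\<in>Q. m \<le> p" and Vm: "V m \<noteq> {0}"
  shows "\<exists>I. is_interval Q I \<and> pmod_iso sc Q V f ((*) :: 'k \<Rightarrow> 'k \<Rightarrow> 'k) (kI_space I) (kI_map I)"
proof -
  have mQ: "m \<in> Q" using QAB(1,4) by blast
  have QA_Q: "\<And>p. p \<in> QA \<Longrightarrow> p \<in> Q" using QAB(1) by blast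
  have QB_Q: "\<And>p. p \<in> QB \<Longrightarrow> p \<in> Q" using QAB(2) by blast
  have Qcases: "\<And>p. p \<in> Q \<Longrightarrow> p \<notin> QA \<Longrightarrow> p \<in> QB" using QAB(3) by blast
  define Ker where "Ker p = {z\<in>V m. f m p z = 0}" for p
  have Kersub: "\<And>p. p \<in> Q \<Longrightarrow> subspace (Ker p) \<and> Ker p \<subseteq> V m" unfolding Ker_def using Ker_sub mQ up by blast
  have Kermono: "\<And>p p'. p \<in> Q \<Longrightarrow> p' \<in> Q \<Longrightarrow> p \<le> p' \<Longrightarrow> Ker p \<subseteq> Ker p'"
    unfolding Ker_def using Ker_mono mQ up by blast
  have Kerm: "Ker m = {0}" unfolding Ker_def using fid[OF mQ] V0[OF mQ] by auto
  obtain pA where pA: "pA \<in> QA \<and> Ker pA \<noteq> V m" "\<forall>p. p \<in> QA \<and> Ker p \<noteq> V m \<longrightarrow> Ker p \<subseteq> Ker pA"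
  proof -
    have "\<exists>p0. (p0 \<in> QA \<and> Ker p0 \<noteq> V m) \<and> (\<forall>p. p \<in> QA \<and> Ker p \<noteq> V m \<longrightarrow> Ker p \<subseteq> Ker p0)"
    proof (rule fam_max[OF mQ, of "\<lambda>p. p \<in> QA \<and> Ker p \<noteq> V m" m Ker])
      show "m \<in> QA \<and> Ker m \<noteq> V m" using QAB(4) Kerm Vm by simp
    next
      fix p assume "p \<in> QA \<and> Ker p \<noteq> V m" then show "subspace (Ker p) \<and> Ker p \<subseteq> V m" using Kersub QA_Q by blast
    next
      fix p p' assume "p \<in> QA \<and> Ker p \<noteq> V m" "p' \<in> QA \<and> Ker p' \<noteq> V m"
      then have "p \<le> p' \<or> p' \<le> p" "p \<in> Q" "p' \<in> Q" using chA QA_Q by blast+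
      then show "Ker p \<subseteq> Ker p' \<or> Ker p' \<subseteq> Ker p" using Kermono by blast
    qed
    then show ?thesis using that by blast
  qed
  have WA: "subspace (Ker pA)" "Ker pA \<subseteq> V m" using Kersub pA QA_Q by blast+
  obtain w0 where w0: "w0 \<in> V m" "w0 \<notin> Ker pA" using WA(2) pA(1) by blast
  obtain H0 where H0: "subspace H0" "Ker pA \<subseteq> H0" "H0 \<subseteq> V m" "w0 \<notin> H0" "\<forall>z\<in>V m. \<exists>h\<in>H0. \<exists>c. z = h + sc c w0"
    using hyperplane_exists[OF WA(1) WA(2) Vsub[OF mQ] w0] by blast
  obtain v where v: "v \<in> V m" "v \<notin> H0" "\<forall>p\<in>QB. \<not> Ker p \<subseteq> H0 \<longrightarrow> v \<in> Ker p"
  proof (cases "\<exists>p\<in>QB. \<not> Ker p \<subseteq> H0")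
    case True
    then obtain p1 where p1: "p1 \<in> QB" "\<not> Ker p1 \<subseteq> H0" by blast
    have "\<exists>p0. (p0 \<in> QB \<and> \<not> Ker p0 \<subseteq> H0) \<and> (\<forall>p. p \<in> QB \<and> \<not> Ker p \<subseteq> H0 \<longrightarrow> Ker p0 \<subseteq> Ker p)"
    proof (rule fam_min[OF mQ, of "\<lambda>p. p \<in> QB \<and> \<not> Ker p \<subseteq> H0" p1 Ker])
      show "p1 \<in> QB \<and> \<not> Ker p1 \<subseteq> H0" using p1 by blast
    next
      fix p assume "p \<in> QB \<and> \<not> Ker p \<subseteq> H0" then show "subspace (Ker p) \<and> Ker p \<subseteq> V m" using Kersub QB_Q by blast
    next
      fix p p' assume "p \<in> QB \<and> \<not> Ker p \<subseteq> H0" "p' \<in> QB \<and> \<not> Ker p' \<subseteq> H0"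
      then have "p \<le> p' \<or> p' \<le> p" "p \<in> Q" "p' \<in> Q" using chB QB_Q by blast+
      then show "Ker p \<subseteq> Ker p' \<or> Ker p' \<subseteq> Ker p" using Kermono by blast
    qed
    then obtain p0 where p0: "p0 \<in> QB" "\<not> Ker p0 \<subseteq> H0" "\<forall>p. p \<in> QB \<and> \<not> Ker p \<subseteq> H0 \<longrightarrow> Ker p0 \<subseteq> Ker p" by blast
    then obtain v' where "v' \<in> Ker p0" "v' \<notin> H0" by blast
    moreover have "v' \<in> V m" using \<open>v' \<in> Ker p0\<close> unfolding Ker_def by blast
    ultimately show ?thesis using that[of v'] p0(3) by blast
  next
    case False
    then show ?thesis using that[of w0] w0(1) H0(4) by blast
  qed
  have Hspan: "\<forall>z\<in>V m. \<exists>h\<in>H0. \<exists>c. z = h + sc c v" using hyper_swap[OF H0(1) H0(3) H0(5) v(1) v(2)] .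
  have vnz: "v \<noteq> 0" using v(2) subspace_0[OF H0(1)] by blast
  have fmm: "f m m v = v" using fid[OF mQ v(1)] .
  have Kprop: "\<And>p. p \<in> Q \<Longrightarrow> f m p v \<noteq> 0 \<Longrightarrow> Ker p \<subseteq> H0"
  proof -
    fix p assume p: "p \<in> Q" "f m p v \<noteq> 0"
    have vK: "v \<notin> Ker p" using p(2) unfolding Ker_def by blast
    show "Ker p \<subseteq> H0"
    proof (cases "p \<in> QA")
      case True
      then have "Ker p \<noteq> V m" using vK v(1) by blast
      then show ?thesis using pA(2) True H0(2) by blast
    next
      case False
      then have "p \<in> QB" using Qcases p(1) by blast
      then show ?thesis using v(3) vK by blast
    qed
  qed
  define Lu where "Lu = {p\<in>Q. f m p v \<noteq> 0}"
  have mLu: "m \<in> Lu" unfolding Lu_def using mQ fmm vnz by simp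
  have LuQ: "Lu \<subseteq> Q" unfolding Lu_def by blast
  have hypC: "\<And>C. C \<subseteq> Q \<Longrightarrow> m \<in> C \<Longrightarrow> (\<And>a b. a \<in> C \<Longrightarrow> b \<in> C \<Longrightarrow> a \<le> b \<or> b \<le> a) \<Longrightarrow>
      \<exists>Hs. Hs m = H0 \<and>
    (\<forall>p\<in>Lu \<inter> C. subspace (Hs p) \<and> Hs p \<subseteq> V p \<and> f m p v \<notin> Hs p \<and> (\<forall>z\<in>V p. \<exists>h\<in>Hs p. \<exists>c. z = h + sc c (f m p v))) \<and>
    (\<forall>p\<in>Lu \<inter> C. \<forall>p'\<in>Lu \<inter> C. p \<le> p' \<longrightarrow> f p p' ` Hs p \<subseteq> Hs p')"
  proof -
    fix C assume C: "C \<subseteq> Q" "m \<in> C" and ch: "\<And>a b. a \<in> C \<Longrightarrow> b \<in> C \<Longrightarrow> a \<le> b \<or> b \<le> a"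
    show "\<exists>Hs. Hs m = H0 \<and>
    (\<forall>p\<in>Lu \<inter> C. subspace (Hs p) \<and> Hs p \<subseteq> V p \<and> f m p v \<notin> Hs p \<and> (\<forall>z\<in>V p. \<exists>h\<in>Hs p. \<exists>c. z = h + sc c (f m p v))) \<and>
    (\<forall>p\<in>Lu \<inter> C. \<forall>p'\<in>Lu \<inter> C. p \<le> p' \<longrightarrow> f p p' ` Hs p \<subseteq> Hs p')"
    proof (rule hyp[OF mQ v(1) _ _ _ H0(1) H0(3) v(2) Hspan])
      show "Lu \<inter> C \<subseteq> Q" "m \<in> Lu \<inter> C" "\<forall>p\<in>Lu \<inter> C. m \<le> p" using LuQ mLu C up by blast+
      show "\<forall>r\<in>Lu \<inter> C. \<forall>z\<in>V m. f m r z = 0 \<longrightarrow> z \<in> H0"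
      proof (intro ballI impI)
        fix r z assume r: "r \<in> Lu \<inter> C" and z: "z \<in> V m" "f m r z = 0"
        then have "r \<in> Q" "f m r v \<noteq> 0" unfolding Lu_def by blast+
        then have "Ker r \<subseteq> H0" using Kprop by blast
        then show "z \<in> H0" using z unfolding Ker_def by blast
      qed
    next
      fix p a b assume "a \<in> Lu \<inter> C" "b \<in> Lu \<inter> C"
      then show "a \<le> b \<or> b \<le> a" using ch by blast
    next
      fix p a b assume "a \<in> Lu \<inter> C" "b \<in> Lu \<inter> C"
      then show "a \<le> b \<or> b \<le> a" using ch by blast
    qed
  qed
  have exA: "\<exists>Hs. Hs m = H0 \<and>
    (\<forall>p\<in>Lu \<inter> QA. subspace (Hs p) \<and> Hs p \<subseteq> V p \<and> f m p v \<notin> Hs p \<and> (\<forall>z\<in>V p. \<exists>h\<in>Hs p. \<exists>c. z = h + sc c (f m p v))) \<and>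
    (\<forall>p\<in>Lu \<inter> QA. \<forall>p'\<in>Lu \<inter> QA. p \<le> p' \<longrightarrow> f p p' ` Hs p \<subseteq> Hs p')"
    by (rule hypC[OF QAB(1,4)], rule chA)
  then obtain HA where HA: "HA m = H0"
    "\<forall>p\<in>Lu \<inter> QA. subspace (HA p) \<and> HA p \<subseteq> V p \<and> f m p v \<notin> HA p \<and> (\<forall>z\<in>V p. \<exists>h\<in>HA p. \<exists>c. z = h + sc c (f m p v))"
    "\<forall>p\<in>Lu \<inter> QA. \<forall>p'\<in>Lu \<inter> QA. p \<le> p' \<longrightarrow> f p p' ` HA p \<subseteq> HA p'"
    by (elim exE conjE)
  have exB: "\<exists>Hs. Hs m = H0 \<and>
    (\<forall>p\<in>Lu \<inter> QB. subspace (Hs p) \<and> Hs p \<subseteq> V p \<and> f m p v \<notin> Hs p \<and> (\<forall>z\<in>V p. \<exists>h\<in>Hs p. \<exists>c. z = h + sc c (f m p v))) \<and>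
    (\<forall>p\<in>Lu \<inter> QB. \<forall>p'\<in>Lu \<inter> QB. p \<le> p' \<longrightarrow> f p p' ` Hs p \<subseteq> Hs p')"
    by (rule hypC[OF QAB(2,5)], rule chB)
  then obtain HB where HB: "HB m = H0"
    "\<forall>p\<in>Lu \<inter> QB. subspace (HB p) \<and> HB p \<subseteq> V p \<and> f m p v \<notin> HB p \<and> (\<forall>z\<in>V p. \<exists>h\<in>HB p. \<exists>c. z = h + sc c (f m p v))"
    "\<forall>p\<in>Lu \<inter> QB. \<forall>p'\<in>Lu \<inter> QB. p \<le> p' \<longrightarrow> f p p' ` HB p \<subseteq> HB p'"
    by (elim exE conjE)
  define Hs where "Hs p = (if p \<in> QA then HA p else HB p)" for p
  have Hsm: "Hs m = H0" unfolding Hs_def using HA(1) QAB(4) by simp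
  have Hs1: "\<forall>p\<in>Lu. subspace (Hs p) \<and> Hs p \<subseteq> V p \<and> f m p v \<notin> Hs p \<and> (\<forall>z\<in>V p. \<exists>h\<in>Hs p. \<exists>c. z = h + sc c (f m p v))"
  proof
    fix p assume p: "p \<in> Lu"
    show "subspace (Hs p) \<and> Hs p \<subseteq> V p \<and> f m p v \<notin> Hs p \<and> (\<forall>z\<in>V p. \<exists>h\<in>Hs p. \<exists>c. z = h + sc c (f m p v))"
    proof (cases "p \<in> QA")
      case True then show ?thesis using HA(2) p unfolding Hs_def by simp
    next
      case False
      then have "p \<in> QB" using p LuQ Qcases by blast
      then show ?thesis using HB(2) p False unfolding Hs_def by simp
    qed
  qed
  have Hs2: "\<forall>p\<in>Lu. \<forall>p'\<in>Lu. p \<le> p' \<longrightarrow> f p p' ` Hs p \<subseteq> Hs p'"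
  proof (intro ballI impI)
    fix p p' assume pp: "p \<in> Lu" "p' \<in> Lu" "p \<le> p'"
    have pQ: "p \<in> Q" "p' \<in> Q" using pp LuQ by blast+
    show "f p p' ` Hs p \<subseteq> Hs p'"
    proof (cases "p \<in> QA")
      case pA': True
      show ?thesis
      proof (cases "p' \<in> QA")
        case True then show ?thesis using HA(3) pp pA' unfolding Hs_def by simp
      next
        case False
        then have p'B: "p' \<in> QB" using pQ Qcases by blast
        then have "p = m" using S3[OF pA'] pp(3) False QAB(4) by blast
        then have "f p p' ` HB p \<subseteq> HB p'" using HB(3) pp p'B QAB(5) by blast
        then show ?thesis using \<open>p = m\<close> HA(1) HB(1) QAB(4) False unfolding Hs_def by simp
      qed
    next
      case pA': False
      then have pB: "p \<in> QB" using pQ Qcases by blast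
      show ?thesis
      proof (cases "p' \<in> QA")
        case True
        then have "p' = m" using S3[OF True pB] pp(3) pA' QAB(4) by blast
        then have "p = m" using pp(3) up pQ(1) antisym by blast
        then show ?thesis using pA' QAB(4) by simp
      next
        case False
        then have "p' \<in> QB" using pQ Qcases by blast
        then show ?thesis using HB(3) pp pB pA' False unfolding Hs_def by simp
      qed
    qed
  qed
  show ?thesis
  proof (rule gdl[OF indec mQ v(1) vnz H0(1) H0(3) v(2) Hspan, of "{m}" "\<lambda>_. v" Lu Hs])
    show "{m} \<subseteq> Q" "\<forall>p\<in>{m}. p \<le> m" "m \<in> {m}" using mQ by auto
    show "\<forall>p\<in>{m}. v \<in> V p \<and> f p m v = v" using v(1) fmm by simp
    show "\<forall>p\<in>{m}. \<forall>p'\<in>{m}. p \<le> p' \<longrightarrow> f p p' v = v" using fmm by simp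
    show "\<forall>p\<in>Q. p \<le> m \<longrightarrow> p \<notin> {m} \<longrightarrow> f p m ` V p \<subseteq> H0" using up antisym by blast
    show "Lu \<subseteq> Q" "\<forall>p\<in>Lu. m \<le> p" "m \<in> Lu" using LuQ up mLu by blast+
    show "Hs m = H0" using Hsm .
    show "\<forall>p\<in>Lu. subspace (Hs p) \<and> Hs p \<subseteq> V p \<and> f m p v \<notin> Hs p \<and> (\<forall>z\<in>V p. \<exists>h\<in>Hs p. \<exists>c. z = h + sc c (f m p v))" using Hs1 .
    show "\<forall>p\<in>Lu. \<forall>p'\<in>Lu. p \<le> p' \<longrightarrow> f p p' ` Hs p \<subseteq> Hs p'" using Hs2 .
    show "\<forall>p\<in>Q. m \<le> p \<longrightarrow> p \<notin> Lu \<longrightarrow> f m p v = 0" unfolding Lu_def by blast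
    show "\<forall>p\<in>Q. p \<le> m \<or> m \<le> p \<or> V p = {0}" using up by blast
  qed
qed

end


context pm
begin

lemma case_chain:
  assumes indec: "indecomposable sc Q V f"
  and QAB: "QA \<subseteq> Q" "QB \<subseteq> Q" "Q = QA \<union> QB" "m \<in> QA" "m \<in> QB"
  and chA: "\<And>a b. a \<in> QA \<Longrightarrow> b \<in> QA \<Longrightarrow> a \<le> b \<or> b \<le> a"
  and S3: "\<And>a b. a \<in> QA \<Longrightarrow> b \<in> QB \<Longrightarrow> a \<le> b \<or> b \<le> a \<Longrightarrow> a = m \<or> b = m"
  and Vm: "V m = {0}" and qA: "q \<in> QA" and Vq: "V q \<noteq> {0}"
  shows "\<exists>I. is_interval Q I \<and> pmod_iso sc Q V f ((*) :: 'k \<Rightarrow> 'k \<Rightarrow> 'k) (kI_space I) (kI_map I)"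
proof -
  have mQ: "m \<in> Q" using QAB(1,4) by blast
  have QA_Q: "\<And>p. p \<in> QA \<Longrightarrow> p \<in> Q" using QAB(1) by blast
  have Qcases: "\<And>p. p \<in> Q \<Longrightarrow> p \<notin> QA \<Longrightarrow> p \<in> QB" using QAB(3) by blast
  have qQ: "q \<in> Q" using QA_Q[OF qA] .
  have qm: "q \<noteq> m" using Vq Vm by blast
  define P1 where "P1 p = (if p \<in> QA then V p else {0})" for p
  define P2 where "P2 p = (if p \<in> QA then {0} else V p)" for p
  have P10: "\<And>p. p \<in> Q \<Longrightarrow> 0 \<in> P1 p" unfolding P1_def using V0 by simp
  have P20: "\<And>p. p \<in> Q \<Longrightarrow> 0 \<in> P2 p" unfolding P2_def using V0 by simp
  have P1sub: "submod sc Q V f P1"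
    unfolding submod_def
  proof (intro conjI ballI impI)
    fix p assume p: "p \<in> Q"
    show "subspace (P1 p)" unfolding P1_def using Vsub[OF p] by simp
    show "P1 p \<subseteq> V p" unfolding P1_def using V0[OF p] by simp
  next
    fix p r z assume p: "p \<in> Q" "r \<in> Q" "p \<le> r" and z: "z \<in> P1 p"
    show "f p r z \<in> P1 r"
    proof (cases "p \<in> QA")
      case pA: True
      then have zV: "z \<in> V p" using z unfolding P1_def by simp
      show ?thesis
      proof (cases "r \<in> QA")
        case True then show ?thesis using fV[OF p zV] unfolding P1_def by simp
      next
        case False
        then have "r \<in> QB" using Qcases p(2) by blast
        then have "p = m" using S3[OF pA] p(3) False QAB(4) by blast
        then have "z = 0" using zV Vm by simp
        then show ?thesis using f0[OF p] P10[OF p(2)] by simp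
      qed
    next
      case False
      then have "z = 0" using z unfolding P1_def by simp
      then show ?thesis using f0[OF p] P10[OF p(2)] by simp
    qed
  qed
  have P2sub: "submod sc Q V f P2"
    unfolding submod_def
  proof (intro conjI ballI impI)
    fix p assume p: "p \<in> Q"
    show "subspace (P2 p)" unfolding P2_def using Vsub[OF p] by simp
    show "P2 p \<subseteq> V p" unfolding P2_def using V0[OF p] by simp
  next
    fix p r z assume p: "p \<in> Q" "r \<in> Q" "p \<le> r" and z: "z \<in> P2 p"
    show "f p r z \<in> P2 r"
    proof (cases "p \<in> QA")
      case pA: False
      then have zV: "z \<in> V p" using z unfolding P2_def by simp
      have pB: "p \<in> QB" using Qcases p(1) pA by blast
      show ?thesis
      proof (cases "r \<in> QA")
        case False then show ?thesis using fV[OF p zV] unfolding P2_def by simp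
      next
        case True
        then have "r = m" using S3[OF True pB] p(3) pA QAB(4) by blast
        then have "f p r z = 0" using fV[OF p zV] Vm by simp
        then show ?thesis using P20[OF p(2)] by simp
      qed
    next
      case True
      then have "z = 0" using z unfolding P2_def by simp
      then show ?thesis using f0[OF p] P20[OF p(2)] by simp
    qed
  qed
  have Pdec: "\<forall>p\<in>Q. \<forall>z\<in>V p. \<exists>a\<in>P1 p. \<exists>b\<in>P2 p. z = a + b"
  proof (intro ballI)
    fix p z assume p: "p \<in> Q" and z: "z \<in> V p"
    show "\<exists>a\<in>P1 p. \<exists>b\<in>P2 p. z = a + b"
    proof (cases "p \<in> QA")
      case True
      then have "z \<in> P1 p" "0 \<in> P2 p" using z unfolding P1_def P2_def by simp_all
      then show ?thesis by (metis add.right_neutral)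
    next
      case False
      then have "0 \<in> P1 p" "z \<in> P2 p" using z unfolding P1_def P2_def by simp_all
      then show ?thesis by (metis add.left_neutral)
    qed
  qed
  have Pint: "\<forall>p\<in>Q. P1 p \<inter> P2 p = {0}"
    unfolding P1_def P2_def using V0 by auto
  have indclause: "\<forall>A B. submod sc Q V f A \<and> submod sc Q V f B \<and>
        (\<forall>q\<in>Q. \<forall>v\<in>V q. \<exists>a\<in>A q. \<exists>b\<in>B q. v = a + b) \<and>
        (\<forall>q\<in>Q. A q \<inter> B q = {0})
        \<longrightarrow> (\<forall>q\<in>Q. A q = {0}) \<or> (\<forall>q\<in>Q. B q = {0})"
    using indec unfolding indecomposable_def by (elim conjE)
  have "(\<forall>p\<in>Q. P1 p = {0}) \<or> (\<forall>p\<in>Q. P2 p = {0})"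
    using indclause[rule_format, of P1 P2] P1sub P2sub Pdec Pint by blast
  moreover have "P1 q \<noteq> {0}" unfolding P1_def using qA Vq by simp
  ultimately have P2z: "\<forall>p\<in>Q. P2 p = {0}" using qQ by blast
  have supp: "\<And>p. p \<in> Q \<Longrightarrow> p \<notin> QA \<Longrightarrow> V p = {0}"
  proof -
    fix p assume "p \<in> Q" "p \<notin> QA"
    then have "P2 p = {0}" using P2z by blast
    then show "V p = {0}" using \<open>p \<notin> QA\<close> unfolding P2_def by simp
  qed
  have cmpA: "\<And>p. p \<in> Q \<Longrightarrow> p \<le> q \<or> q \<le> p \<Longrightarrow> p \<in> QA"
  proof (rule ccontr)
    fix p assume p: "p \<in> Q" "p \<le> q \<or> q \<le> p" "p \<notin> QA"
    then have "p \<in> QB" using Qcases by blast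
    then have "q = m \<or> p = m" using S3[OF qA] p(2) by blast
    then show False using qm p(3) QAB(4) by blast
  qed
  define Im where "Im p = f p q ` V p" for p
  have Imq: "Im q = V q" unfolding Im_def using fpp_img[OF qQ] .
  obtain p0 where p0: "p0 \<in> Q \<and> p0 \<le> q \<and> Im p0 \<noteq> {0}" "\<forall>p. p \<in> Q \<and> p \<le> q \<and> Im p \<noteq> {0} \<longrightarrow> Im p0 \<subseteq> Im p"
  proof -
    have "\<exists>p0. (p0 \<in> Q \<and> p0 \<le> q \<and> Im p0 \<noteq> {0}) \<and> (\<forall>p. p \<in> Q \<and> p \<le> q \<and> Im p \<noteq> {0} \<longrightarrow> Im p0 \<subseteq> Im p)"
    proof (rule fam_min[OF qQ, of "\<lambda>p. p \<in> Q \<and> p \<le> q \<and> Im p \<noteq> {0}" q Im])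
      show "q \<in> Q \<and> q \<le> q \<and> Im q \<noteq> {0}" using qQ Imq Vq by simp
    next
      fix p assume "p \<in> Q \<and> p \<le> q \<and> Im p \<noteq> {0}"
      then show "subspace (Im p) \<and> Im p \<subseteq> V q" unfolding Im_def using Im_sub qQ by blast
    next
      fix p p' assume a: "p \<in> Q \<and> p \<le> q \<and> Im p \<noteq> {0}" "p' \<in> Q \<and> p' \<le> q \<and> Im p' \<noteq> {0}"
      then have "p \<in> QA" "p' \<in> QA" using cmpA by blast+
      then have "p \<le> p' \<or> p' \<le> p" using chA by blast
      then show "Im p \<subseteq> Im p' \<or> Im p' \<subseteq> Im p" unfolding Im_def using Im_mono a qQ by blast
    qed
    then show ?thesis using that by blast
  qed
  have Imp0: "subspace (Im p0) \<and> Im p0 \<subseteq> V q" unfolding Im_def using Im_sub p0(1) qQ by blast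
  obtain v where v: "v \<in> Im p0" "v \<noteq> 0" using nonzero_elem[of "Im p0"] Imp0 p0(1) by blast
  have vV: "v \<in> V q" using v Imp0 by blast
  define Ker where "Ker p = {z\<in>V q. f q p z = 0}" for p
  have Kerq: "Ker q = {0}" unfolding Ker_def using fid[OF qQ] V0[OF qQ] by auto
  obtain p1 where p1: "p1 \<in> Q \<and> q \<le> p1 \<and> v \<notin> Ker p1" "\<forall>p. p \<in> Q \<and> q \<le> p \<and> v \<notin> Ker p \<longrightarrow> Ker p \<subseteq> Ker p1"
  proof -
    have "\<exists>p0. (p0 \<in> Q \<and> q \<le> p0 \<and> v \<notin> Ker p0) \<and> (\<forall>p. p \<in> Q \<and> q \<le> p \<and> v \<notin> Ker p \<longrightarrow> Ker p \<subseteq> Ker p0)"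
    proof (rule fam_max[OF qQ, of "\<lambda>p. p \<in> Q \<and> q \<le> p \<and> v \<notin> Ker p" q Ker])
      show "q \<in> Q \<and> q \<le> q \<and> v \<notin> Ker q" using qQ Kerq v(2) by simp
    next
      fix p assume "p \<in> Q \<and> q \<le> p \<and> v \<notin> Ker p"
      then show "subspace (Ker p) \<and> Ker p \<subseteq> V q" unfolding Ker_def using Ker_sub qQ by blast
    next
      fix p p' assume a: "p \<in> Q \<and> q \<le> p \<and> v \<notin> Ker p" "p' \<in> Q \<and> q \<le> p' \<and> v \<notin> Ker p'"
      then have "p \<in> QA" "p' \<in> QA" using cmpA by blast+
      then have "p \<le> p' \<or> p' \<le> p" using chA by blast
      then show "Ker p \<subseteq> Ker p' \<or> Ker p' \<subseteq> Ker p" unfolding Ker_def using Ker_mono a qQ by blast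
    qed
    then show ?thesis using that by blast
  qed
  have W: "subspace (Ker p1)" "Ker p1 \<subseteq> V q" unfolding Ker_def using Ker_sub qQ p1(1) by blast+
  obtain H0 where H0: "subspace H0" "Ker p1 \<subseteq> H0" "H0 \<subseteq> V q" "v \<notin> H0" "\<forall>z\<in>V q. \<exists>h\<in>H0. \<exists>c. z = h + sc c v"
    using hyperplane_exists[OF W(1) W(2) Vsub[OF qQ] vV] p1(1) by blast
  define Ld where "Ld = {p\<in>Q. p \<le> q \<and> v \<in> Im p}"
  have LdQ: "Ld \<subseteq> Q" unfolding Ld_def by blast
  have qLd: "q \<in> Ld" unfolding Ld_def using qQ Imq vV by simp
  have LdA: "\<And>p. p \<in> Ld \<Longrightarrow> p \<in> QA" unfolding Ld_def using cmpA by blast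
  obtain x where x: "\<forall>p\<in>Ld. x p \<in> V p \<and> f p q (x p) = v" "\<forall>p\<in>Ld. \<forall>p'\<in>Ld. p \<le> p' \<longrightarrow> f p p' (x p) = x p'"
  proof -
    have "\<exists>x. (\<forall>p\<in>Ld. x p \<in> V p \<and> f p q (x p) = v) \<and> (\<forall>p\<in>Ld. \<forall>p'\<in>Ld. p \<le> p' \<longrightarrow> f p p' (x p) = x p')"
    proof (rule lift[OF qQ vV v(2) LdQ qLd])
      show "\<forall>p\<in>Ld. p \<le> q" "\<forall>p\<in>Ld. v \<in> f p q ` V p" unfolding Ld_def Im_def by blast+
    next
      fix p a b assume "a \<in> Ld" "b \<in> Ld"
      then show "a \<le> b \<or> b \<le> a" using LdA chA by blast
    next
      fix p a b assume "a \<in> Ld" "b \<in> Ld"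
      then show "a \<le> b \<or> b \<le> a" using LdA chA by blast
    qed
    then show ?thesis by (elim exE conjE) (rule that; assumption)
  qed
  have Ldc: "\<forall>p\<in>Q. p \<le> q \<longrightarrow> p \<notin> Ld \<longrightarrow> f p q ` V p \<subseteq> H0"
  proof (intro ballI impI)
    fix p assume p: "p \<in> Q" "p \<le> q" "p \<notin> Ld"
    then have vp: "v \<notin> Im p" unfolding Ld_def by simp
    then have "Im p = {0}" using p0(2) p v(1) by blast
    then show "f p q ` V p \<subseteq> H0" unfolding Im_def using subspace_0[OF H0(1)] by simp
  qed
  define Lu where "Lu = {p\<in>Q. q \<le> p \<and> f q p v \<noteq> 0}"
  have LuQ: "Lu \<subseteq> Q" unfolding Lu_def by blast
  have fqq: "f q q v = v" using fid[OF qQ vV] .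
  have qLu: "q \<in> Lu" unfolding Lu_def using qQ fqq v(2) by simp
  have LuA: "\<And>p. p \<in> Lu \<Longrightarrow> p \<in> QA" unfolding Lu_def using cmpA by blast
  obtain Hs where Hs: "Hs q = H0"
    "\<forall>p\<in>Lu. subspace (Hs p) \<and> Hs p \<subseteq> V p \<and> f q p v \<notin> Hs p \<and> (\<forall>z\<in>V p. \<exists>h\<in>Hs p. \<exists>c. z = h + sc c (f q p v))"
    "\<forall>p\<in>Lu. \<forall>p'\<in>Lu. p \<le> p' \<longrightarrow> f p p' ` Hs p \<subseteq> Hs p'"
  proof -
    have "\<exists>Hs. Hs q = H0 \<and>
    (\<forall>p\<in>Lu. subspace (Hs p) \<and> Hs p \<subseteq> V p \<and> f q p v \<notin> Hs p \<and> (\<forall>z\<in>V p. \<exists>h\<in>Hs p. \<exists>c. z = h + sc c (f q p v))) \<and>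
    (\<forall>p\<in>Lu. \<forall>p'\<in>Lu. p \<le> p' \<longrightarrow> f p p' ` Hs p \<subseteq> Hs p')"
    proof (rule hyp[OF qQ vV LuQ qLu _ H0(1) H0(3) H0(4) H0(5)])
      show "\<forall>p\<in>Lu. q \<le> p" unfolding Lu_def by blast
      show "\<forall>r\<in>Lu. \<forall>z\<in>V q. f q r z = 0 \<longrightarrow> z \<in> H0"
      proof (intro ballI impI)
        fix r z assume r: "r \<in> Lu" and z: "z \<in> V q" "f q r z = 0"
        then have "r \<in> Q \<and> q \<le> r \<and> v \<notin> Ker r" unfolding Lu_def Ker_def by blast
        then have "Ker r \<subseteq> H0" using p1(2) H0(2) by blast
        then show "z \<in> H0" using z unfolding Ker_def by blast
      qed
    next
      fix p a b assume "a \<in> Lu" "b \<in> Lu"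
      then show "a \<le> b \<or> b \<le> a" using LuA chA by blast
    next
      fix p a b assume "a \<in> Lu" "b \<in> Lu"
      then show "a \<le> b \<or> b \<le> a" using LuA chA by blast
    qed
    then show ?thesis by (elim exE conjE) (rule that; assumption)
  qed
  show ?thesis
  proof (rule gdl[OF indec qQ vV v(2) H0(1) H0(3) H0(4) H0(5) LdQ _ qLd x(1) x(2) Ldc LuQ _ qLu Hs(1) Hs(2) Hs(3)])
    show "\<forall>p\<in>Ld. p \<le> q" unfolding Ld_def by blast
    show "\<forall>p\<in>Lu. q \<le> p" unfolding Lu_def by blast
    show "\<forall>p\<in>Q. q \<le> p \<longrightarrow> p \<notin> Lu \<longrightarrow> f q p v = 0" unfolding Lu_def by blast
    show "\<forall>p\<in>Q. p \<le> q \<or> q \<le> p \<or> V p = {0}"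
    proof
      fix p assume p: "p \<in> Q"
      show "p \<le> q \<or> q \<le> p \<or> V p = {0}"
      proof (cases "p \<in> QA")
        case True then show ?thesis using chA qA by blast
      next
        case False then show ?thesis using supp p by blast
      qed
    qed
  qed
qed

end


context pm
begin

lemma main_abstract:
  assumes indec: "indecomposable sc Q V f"
  and QAB: "QA \<subseteq> Q" "QB \<subseteq> Q" "Q = QA \<union> QB" "m \<in> QA" "m \<in> QB"
  and chA: "\<And>a b. a \<in> QA \<Longrightarrow> b \<in> QA \<Longrightarrow> a \<le> b \<or> b \<le> a"
  and chB: "\<And>a b. a \<in> QB \<Longrightarrow> b \<in> QB \<Longrightarrow> a \<le> b \<or> b \<le> a"
  and S3: "\<And>a b. a \<in> QA \<Longrightarrow> b \<in> QB \<Longrightarrow> a \<le> b \<or> b \<le> a \<Longrightarrow> a = m \<or> b = m"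
  and du: "(\<forall>p\<in>Q. p \<le> m) \<or> (\<forall>p\<in>Q. m \<le> p)"
  shows "\<exists>I. is_interval Q I \<and> pmod_iso sc Q V f ((*) :: 'k \<Rightarrow> 'k \<Rightarrow> 'k) (kI_space I) (kI_map I)"
proof (cases "V m = {0}")
  case False
  show ?thesis
  proof (cases "\<forall>p\<in>Q. p \<le> m")
    case True
    show ?thesis using case_down[OF indec QAB chA chB S3 True False] .
  next
    case nd: False
    then have "\<forall>p\<in>Q. m \<le> p" using du by blast
    show ?thesis using case_up[OF indec QAB chA chB S3 \<open>\<forall>p\<in>Q. m \<le> p\<close> False] .
  qed
next
  case Vm: True
  obtain q where q: "q \<in> Q" "V q \<noteq> {0}" using indec unfolding indecomposable_def by blast
  show ?thesis
  proof (cases "q \<in> QA")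
    case True
    show ?thesis using case_chain[OF indec QAB chA S3 Vm True q(2)] .
  next
    case False
    then have qB: "q \<in> QB" using q(1) QAB(3) by blast
    have QBA: "Q = QB \<union> QA" using QAB(3) by blast
    have S3': "\<And>a b. a \<in> QB \<Longrightarrow> b \<in> QA \<Longrightarrow> a \<le> b \<or> b \<le> a \<Longrightarrow> a = m \<or> b = m"
      using S3 by blast
    show ?thesis using case_chain[OF indec QAB(2,1) QBA QAB(5,4) chB S3' Vm qB q(2)] .
  qed
qed

end

lemma shape_down:
  fixes x :: "'s::linorder" and y :: "'t::linorder"
  assumes Q: "Q = cross_down x y"
  shows "(x,y) \<in> Q" "Q = {p\<in>Q. fst p = x} \<union> {p\<in>Q. snd p = y}"
    "\<And>a b. a \<in> {p\<in>Q. fst p = x} \<Longrightarrow> b \<in> {p\<in>Q. fst p = x} \<Longrightarrow> a \<le> b \<or> b \<le> a"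
    "\<And>a b. a \<in> {p\<in>Q. snd p = y} \<Longrightarrow> b \<in> {p\<in>Q. snd p = y} \<Longrightarrow> a \<le> b \<or> b \<le> a"
    "\<And>a b. a \<in> {p\<in>Q. fst p = x} \<Longrightarrow> b \<in> {p\<in>Q. snd p = y} \<Longrightarrow> a \<le> b \<or> b \<le> a \<Longrightarrow> a = (x,y) \<or> b = (x,y)"
    "\<forall>p\<in>Q. p \<le> (x,y)"
  using Q unfolding cross_down_def less_eq_prod_def
  by (auto simp: linear antisym)

lemma shape_up:
  fixes x :: "'s::linorder" and y :: "'t::linorder"
  assumes Q: "Q = cross_up x y"
  shows "(x,y) \<in> Q" "Q = {p\<in>Q. fst p = x} \<union> {p\<in>Q. snd p = y}"
    "\<And>a b. a \<in> {p\<in>Q. fst p = x} \<Longrightarrow> b \<in> {p\<in>Q. fst p = x} \<Longrightarrow> a \<le> b \<or> b \<le> a"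
    "\<And>a b. a \<in> {p\<in>Q. snd p = y} \<Longrightarrow> b \<in> {p\<in>Q. snd p = y} \<Longrightarrow> a \<le> b \<or> b \<le> a"
    "\<And>a b. a \<in> {p\<in>Q. fst p = x} \<Longrightarrow> b \<in> {p\<in>Q. snd p = y} \<Longrightarrow> a \<le> b \<or> b \<le> a \<Longrightarrow> a = (x,y) \<or> b = (x,y)"
    "\<forall>p\<in>Q. (x,y) \<le> p"
  using Q unfolding cross_up_def less_eq_prod_def
  by (auto simp: linear antisym)

theorem lemma5p3:
  fixes sc :: "'k::field \<Rightarrow> 'v::ab_group_add \<Rightarrow> 'v"
    and x :: "'s::linorder" and y :: "'t::linorder"
    and Q :: "('s \<times> 't) set"
    and V :: "'s \<times> 't \<Rightarrow> 'v set"
    and f :: "'s \<times> 't \<Rightarrow> 's \<times> 't \<Rightarrow> 'v \<Rightarrow> 'v"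
  assumes "vector_space sc"
    and "Q = cross_down x y \<or> Q = cross_up x y"
    and "pmod sc Q V f"
    and "pfd sc Q V"
    and "indecomposable sc Q V f"
  shows "\<exists>I. is_interval Q I \<and>
           pmod_iso sc Q V f ((*) :: 'k \<Rightarrow> 'k \<Rightarrow> 'k) (kI_space I) (kI_map I)"
proof -
  interpret pm sc Q V f
    by (rule pm.intro[OF assms(1)], unfold_locales, rule assms(3), rule assms(4))
  define QA where "QA = {p\<in>Q. fst p = x}"
  define QB where "QB = {p\<in>Q. snd p = y}"
  have sub: "QA \<subseteq> Q" "QB \<subseteq> Q" unfolding QA_def QB_def by blast+
  show ?thesis
  proof (cases "Q = cross_down x y")
    case True
    note s = shape_down[OF True, folded QA_def QB_def]
    have m: "(x,y) \<in> QA" "(x,y) \<in> QB" using s(1) unfolding QA_def QB_def by simp_all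
    have du: "(\<forall>p\<in>Q. p \<le> (x,y)) \<or> (\<forall>p\<in>Q. (x,y) \<le> p)" using shape_down(6)[OF True] by (rule disjI1)
    show ?thesis by (rule main_abstract[OF assms(5) sub s(2) m s(3) s(4) s(5) du])
  next
    case False
    then have Qu: "Q = cross_up x y" using assms(2) by blast
    note s = shape_up[OF Qu, folded QA_def QB_def]
    have m: "(x,y) \<in> QA" "(x,y) \<in> QB" using s(1) unfolding QA_def QB_def by simp_all
    have du: "(\<forall>p\<in>Q. p \<le> (x,y)) \<or> (\<forall>p\<in>Q. (x,y) \<le> p)" using shape_up(6)[OF Qu] by (rule disjI2)
    show ?thesis by (rule main_abstract[OF assms(5) sub s(2) m s(3) s(4) s(5) du])
  qed
qed


end
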